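(* Let $m\geq1$ be a fixed integer and $s\in\mathbb{C}$ with $\Re(s)=\sigma>1$. Then the spectrum $$F(\sigma)=\lim_{x\to\infty}\frac1x\sum_{n\leq x}f(n,s)f(n+m,\overline{s})=\sum_{q\geq1}\left|\frac{\mu(q)}{q^{s-1}\varphi(q)}\right|^2c_q(m)$$ has the product decomposition $$F(\sigma)=\prod_{p\mid m}\Big(1+\frac{1}{p^{2\sigma-2}(p-1)}\Big)\prod_{p\nmid m}\Big(1-\frac{1}{p^{2\sigma-2}(p-1)^2}\Big).$$ Moreover: (1) if $m$ is odd, then $F(1)=0$ (the limiting value as $\sigma\to1$); (2) if $m\geq2$ is even and $\sigma\geq1$, then $F(\sigma)\geq 1/2$.
   Context: For integers $q\geq1$ and $n$, the Ramanujan sum is $c_q(n)=\sum_{1\leq k\leq q,\ \gcd(k,q)=1}e^{2\pi i kn/q}$; $\mu$ is the Möbius function, $\varphi$ Euler's totient. For $n\geq 1$ and $\Re(s)>1$, $f(n,s)=\sum_{q\geq 1}\frac{\mu(q)}{q^{s-1}\varphi(q)}c_q(n)$. Products over $p$ run over primes. *)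

theory Defs
  imports "HOL-Analysis.Analysis" "HOL-Number_Theory.Number_Theory" "HOL-Computational_Algebra.Squarefree"
begin

text \<open>Moebius function (mu 0 = 0 by convention; only q >= 1 is used).\<close>
definition mu :: "nat \<Rightarrow> int" where
  "mu n = (if n = 0 \<or> \<not> squarefree n then 0 else (-1) ^ card (prime_factors n))"

definition ramanujan_sum :: "nat \<Rightarrow> nat \<Rightarrow> complex" where
  "ramanujan_sum q n = (\<Sum>k\<in>{k. 1 \<le> k \<and> k \<le> q \<and> coprime k q}.
      exp (2 * pi * \<i> * of_nat k * of_nat n / of_nat q))"

definition coef :: "complex \<Rightarrow> nat \<Rightarrow> complex" where
  "coef s q = of_int (mu q) / (of_nat q powr (s - 1) * of_nat (totient q))"

definition fns :: "nat \<Rightarrow> complex \<Rightarrow> complex" where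
  "fns n s = (\<Sum>q. coef s (Suc q) * ramanujan_sum (Suc q) n)"

definition spectrum :: "nat \<Rightarrow> complex \<Rightarrow> complex" where
  "spectrum m s = (\<Sum>q. complex_of_real ((cmod (coef s (Suc q)))\<^sup>2) * ramanujan_sum (Suc q) m)"

definition euler_factor :: "nat \<Rightarrow> real \<Rightarrow> nat \<Rightarrow> real" where
  "euler_factor m \<sigma> p =
     (if \<not> prime p then 1
      else if p dvd m then 1 + 1 / (real p powr (2 * \<sigma> - 2) * (real p - 1))
      else 1 - 1 / (real p powr (2 * \<sigma> - 2) * (real p - 1)\<^sup>2))"

end

theory Submission
  imports Defs "HOL-Real_Asymp.Real_Asymp"
begin


lemma pf_prod:
  assumes "finite B" "\<forall>p\<in>B. prime p"
  shows "prime_factors (\<Prod>B) = (B::nat set)"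
proof -
  have "0 \<notin> (\<lambda>x. x) ` B" using assms by auto
  then have "prime_factors (prod (\<lambda>x. x) B) = \<Union> ((prime_factors \<circ> (\<lambda>x. x)) ` B)"
    using prime_factors_prod[OF assms(1)] by blast
  also have "... = B" using assms(2) by (auto simp: prime_prime_factors)
  finally show ?thesis by simp
qed

lemma coprime_prime_prod:
  assumes "prime (p::nat)" "p \<notin> B" "\<forall>q\<in>B. prime q"
  shows "coprime p (\<Prod>B)"
  by (rule prod_coprime_right) (metis assms primes_coprime)

lemma prod_primes_pos: "\<forall>p\<in>B. prime (p::nat) \<Longrightarrow> \<Prod>B > 0"
  by (metis prime_gt_0_nat prod_pos)

lemma sqf_prod:
  assumes "finite B" "\<forall>p\<in>B. prime p"
  shows "squarefree (\<Prod>B::nat)"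
  using assms
proof (induction B rule: finite_induct)
  case empty then show ?case by simp
next
  case (insert p B)
  then show ?case
    by (simp add: squarefree_mult_coprime coprime_prime_prod squarefree_prime)
qed

lemma prod_pf:
  assumes "n > 0" "squarefree (n::nat)"
  shows "\<Prod>(prime_factors n) = n"
proof -
  have "n = (\<Prod>p\<in>prime_factors n. p ^ multiplicity p n)"
    using prime_factorization_nat assms(1) by blast
  also have "... = (\<Prod>p\<in>prime_factors n. p)"
  proof (rule prod.cong)
    fix p assume p: "p \<in> prime_factors n"
    then have "prime p" by auto
    have "multiplicity p n \<le> 1" using assms squarefree_factorial_semiring'' \<open>prime p\<close> by blast
    moreover have "multiplicity p n > 0" using p prime_factors_multiplicity by blast
    ultimately have "multiplicity p n = 1" by linarith
    then show "p ^ multiplicity p n = p" by simp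
  qed simp
  finally show ?thesis by simp
qed

lemma dvd_of_pf_subset:
  assumes "finite B" "\<forall>p\<in>B. prime p" "B \<subseteq> prime_factors (n::nat)"
  shows "\<Prod>B dvd n"
  using assms
proof (induction B rule: finite_induct)
  case empty then show ?case by simp
next
  case (insert p B)
  then show ?case
    by (auto intro!: divides_mult coprime_prime_prod)
qed

definition PA :: "nat \<Rightarrow> nat set" where "PA N = {p. prime p \<and> p \<le> N}"

lemma PA_finite[simp]: "finite (PA N)" unfolding PA_def by auto

lemma pf_sub_PA: "0 < n \<Longrightarrow> n \<le> N \<Longrightarrow> prime_factors n \<subseteq> PA N"
  unfolding PA_def
  by (auto dest: dvd_imp_le intro: order_trans)

lemma prod_inj_Pow:
  assumes "\<forall>p\<in>A. prime (p::nat)" "finite A"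
  shows "inj_on (\<lambda>B. \<Prod>B) (Pow A)"
proof (rule inj_onI)
  fix X Y assume "X \<in> Pow A" "Y \<in> Pow A" "\<Prod>X = \<Prod>Y"
  then show "X = Y" using pf_prod[of X] pf_prod[of Y] assms
    by (metis PowD finite_subset subset_eq)
qed

lemma sqf_in_image:
  assumes "\<forall>p\<in>A. prime (p::nat)" "finite A" "0 < d" "squarefree d" "prime_factors d \<subseteq> A"
  shows "d \<in> (\<lambda>B. \<Prod>B) ` Pow A"
  using assms prod_pf by (metis PowI image_eqI)



definition ee :: "real \<Rightarrow> complex" where "ee x = exp (2 * pi * \<i> * of_real x)"

lemma ee_add: "ee (x + y) = ee x * ee y"
  by (simp add: ee_def distrib_left exp_add)

lemma ee_eq_1_iff: "ee x = 1 \<longleftrightarrow> x \<in> \<int>"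
proof
  assume "ee x = 1"
  then obtain n where "Im (2 * pi * \<i> * of_real x) = real_of_int (2 * n) * pi"
    unfolding ee_def exp_eq_1 by blast
  then have "x = of_int n" by simp
  then show "x \<in> \<int>" by simp
next
  assume "x \<in> \<int>"
  then obtain n where "x = of_int n" by (auto elim: Ints_cases)
  then show "ee x = 1" unfolding ee_def exp_eq_1 by (intro conjI exI[of _ n]) auto
qed

lemma ee_int: "ee (of_int n) = 1" by (simp add: ee_eq_1_iff)
lemma ee_nat: "ee (of_nat n) = 1" by (simp add: ee_eq_1_iff)
lemma ee_0: "ee 0 = 1" by (simp add: ee_def)

lemma ee_nat_mult: "ee (real n * x) = ee x ^ n"
proof -
  have "ee (real n * x) = exp (of_nat n * (2 * pi * \<i> * of_real x))"
    by (simp add: ee_def algebra_simps)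
  also have "... = ee x ^ n" by (simp add: exp_of_nat_mult ee_def)
  finally show ?thesis .
qed

lemma norm_ee: "norm (ee x) = 1"
  by (simp add: ee_def)

lemma cnj_ee: "cnj (ee x) = ee (- x)"
  by (simp add: ee_def exp_cnj)

lemma rs_ee: "ramanujan_sum q n = (\<Sum>k\<in>{k. 1 \<le> k \<and> k \<le> q \<and> coprime k q}. ee (real k * real n / real q))"
  unfolding ramanujan_sum_def ee_def by (simp add: mult.assoc)

definition RR :: "nat \<Rightarrow> nat set" where "RR q = {k. k < q \<and> coprime k q}"

lemma RR_finite[simp]: "finite (RR q)" unfolding RR_def by auto

lemma rs_RR:
  assumes "q > 0"
  shows "ramanujan_sum q n = (\<Sum>k\<in>RR q. ee (real k * real n / real q))"
proof (cases "q = 1")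
  case True
  have 1: "{k. 1 \<le> k \<and> k \<le> q \<and> coprime k q} = {1}" using True by auto
  have 2: "RR q = {0}" using True by (auto simp: RR_def)
  show ?thesis unfolding rs_ee 1 2 using True by (simp add: ee_nat ee_0)
next
  case False
  then have "q \<ge> 2" using assms by auto
  have "{k. 1 \<le> k \<and> k \<le> q \<and> coprime k q} = RR q"
  proof -
    have a: "\<not> coprime q q" using \<open>q \<ge> 2\<close> by simp
    have b: "\<not> coprime 0 q" using \<open>q \<ge> 2\<close> by simp
    have "\<And>k. (1 \<le> k \<and> k \<le> q \<and> coprime k q) \<longleftrightarrow> (k < q \<and> coprime k q)"
    proof
      fix k assume "1 \<le> k \<and> k \<le> q \<and> coprime k q"
      then show "k < q \<and> coprime k q" using a by (cases "k = q") auto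
    next
      fix k assume "k < q \<and> coprime k q"
      then show "1 \<le> k \<and> k \<le> q \<and> coprime k q" using b by (cases "k = 0") auto
    qed
    then show ?thesis unfolding RR_def by simp
  qed
  then show ?thesis unfolding rs_ee by simp
qed

lemma ee_mod:
  assumes "q > 0"
  shows "ee (real (a mod q) * real n / real q) = ee (real a * real n / real q)"
proof -
  have "real a = real (a mod q) + real (a div q) * real q"
    by (metis mod_div_mult_eq of_nat_add of_nat_mult add.commute)
  then have "real a * real n / real q = real (a mod q) * real n / real q + real (a div q * n)"
    using assms by (simp add: field_simps)
  then show ?thesis using ee_nat[of "a div q * n"] by (simp add: ee_add)
qed



lemma card_RR: assumes "q > 0" shows "card (RR q) = totient q"
proof (cases "q = 1")
  case True then have "RR q = {0}" by (auto simp: RR_def)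
  then show ?thesis using True by simp
next
  case False
  then have "q \<ge> 2" using assms by auto
  have a: "\<not> coprime q q" using \<open>q \<ge> 2\<close> by simp
  have b: "\<not> coprime 0 q" using \<open>q \<ge> 2\<close> by simp
  have "\<And>k. (k \<in> {0<..q} \<and> coprime k q) \<longleftrightarrow> (k < q \<and> coprime k q)"
  proof
    fix k assume "k \<in> {0<..q} \<and> coprime k q"
    then show "k < q \<and> coprime k q" using a by (cases "k = q") auto
  next
    fix k assume "k < q \<and> coprime k q"
    then show "k \<in> {0<..q} \<and> coprime k q" using b by (cases "k = 0") auto
  qed
  then have "RR q = totatives q" unfolding RR_def totatives_def by auto
  then show ?thesis by (simp add: totient_def)
qed

lemma coprime_lin:
  assumes "coprime a q" "coprime r q" "q > 0"
  shows "coprime (a*r + b*q) (q::nat)"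
proof -
  have "(a*r + b*q) mod q = (a*r) mod q" by simp
  moreover have "coprime (a*r) q" using assms by simp
  ultimately show ?thesis using assms(3)
    by (metis coprime_mod_left_iff not_gr0)
qed

lemma rs_mult:
  assumes "coprime q r" "q > 0" "r > 0"
  shows "ramanujan_sum (q*r) n = ramanujan_sum q n * ramanujan_sum r n"
proof -
  define h where "h = (\<lambda>(a,b). (a*r + b*q) mod (q*r))"
  have qr: "q*r > 0" using assms by simp
  have into: "h ` (RR q \<times> RR r) \<subseteq> RR (q*r)"
  proof clarify
    fix a b assume ab: "a \<in> RR q" "b \<in> RR r"
    then have "coprime a q" "coprime b r" by (auto simp: RR_def)
    have c1: "coprime (a*r + b*q) q"
      using coprime_lin[of a q r b] \<open>coprime a q\<close> assms by (simp add: coprime_commute)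
    have c2: "coprime (a*r + b*q) r"
      using coprime_lin[of b r q a] \<open>coprime b r\<close> assms by (simp add: coprime_commute add.commute)
    have "coprime (a*r + b*q) (q*r)" using c1 c2 by simp
    then have "coprime ((a*r + b*q) mod (q*r)) (q*r)" using qr by (subst coprime_mod_left_iff) auto
    then show "h (a, b) \<in> RR (q*r)" unfolding h_def RR_def using qr by simp
  qed
  have inj: "inj_on h (RR q \<times> RR r)"
  proof (rule inj_onI, clarify)
    fix a b a' b' assume ab: "a \<in> RR q" "b \<in> RR r" "a' \<in> RR q" "b' \<in> RR r"
      and eq: "h (a, b) = h (a', b')"
    have e: "(a*r + b*q) mod (q*r) = (a'*r + b'*q) mod (q*r)" using eq by (simp add: h_def)
    have "(a*r + b*q) mod q = (a'*r + b'*q) mod q"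
      using e by (metis mod_mod_cancel dvd_triv_left)
    then have "[a*r = a'*r] (mod q)" by (simp add: cong_def)
    then have "[a = a'] (mod q)" using cong_mult_rcancel_nat assms(1) by (metis coprime_commute)
    then have 1: "a = a'" using ab by (simp add: cong_def RR_def)
    have "(a*r + b*q) mod r = (a'*r + b'*q) mod r"
      using e by (metis mod_mod_cancel dvd_triv_right)
    then have "[b*q = b'*q] (mod r)" by (simp add: cong_def)
    then have "[b = b'] (mod r)" using cong_mult_rcancel_nat assms(1) by metis
    then have 2: "b = b'" using ab by (simp add: cong_def RR_def)
    show "a = a' \<and> b = b'" using 1 2 by simp
  qed
  have "card (h ` (RR q \<times> RR r)) = card (RR (q*r))"
    using inj assms qr by (simp add: card_image card_cartesian_product card_RR totient_mult_coprime)
  then have img: "h ` (RR q \<times> RR r) = RR (q*r)"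
    using into by (intro card_subset_eq) auto
  have bij: "bij_betw h (RR q \<times> RR r) (RR (q*r))"
    using inj img by (simp add: bij_betw_def)
  have "ramanujan_sum q n * ramanujan_sum r n =
        (\<Sum>x\<in>RR q \<times> RR r. ee (real (fst x) * n / q) * ee (real (snd x) * n / r))"
    using assms by (simp add: rs_RR sum_product sum.cartesian_product')
  also have "... = (\<Sum>x\<in>RR q \<times> RR r. ee (real (h x) * n / (q*r)))"
  proof (rule sum.cong, simp, clarify)
    fix a b
    have "ee (real a * n / q) * ee (real b * n / r) = ee (real a * n / q + real b * n / r)"
      by (simp add: ee_add)
    also have "real a * n / q + real b * n / r = real (a*r + b*q) * n / (q*r)"
      using assms by (simp add: field_simps)
    also have "ee ... = ee (real ((a*r + b*q) mod (q*r)) * n / (q*r))"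
      using ee_mod[OF qr, of "a*r+b*q" n] by simp
    finally show "ee (real (fst (a,b)) * n / q) * ee (real (snd (a,b)) * n / r) = ee (real (h (a,b)) * n / (q*r))"
      by (simp add: h_def)
  qed
  also have "... = (\<Sum>k\<in>RR (q*r). ee (real k * n / (q*r)))"
    using sum.reindex_bij_betw[OF bij, of "\<lambda>k. ee (real k * n / (q*r))"] by simp
  also have "... = ramanujan_sum (q*r) n" using qr by (simp add: rs_RR)
  finally show ?thesis by simp
qed

lemma rs_prime:
  assumes "prime p"
  shows "ramanujan_sum p n = (if p dvd n then of_nat p - 1 else -1)"
proof -
  have p0: "p > 0" using assms prime_gt_0_nat by blast
  have RRp: "RR p = {..<p} - {0}"
    unfolding RR_def using assms
    by (auto simp: prime_nat_iff'' coprime_commute)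
  define z where "z = ee (real n / p)"
  have ek: "ee (real k * n / p) = z ^ k" for k
    using ee_nat_mult[of k "real n / p"] by (simp add: z_def)
  have "ramanujan_sum p n = (\<Sum>k\<in>{..<p} - {0}. z ^ k)"
    using p0 by (simp add: rs_RR RRp ek)
  also have "... = (\<Sum>k<p. z ^ k) - 1"
    using p0 by (simp add: sum_diff1)
  finally have A: "ramanujan_sum p n = (\<Sum>k<p. z ^ k) - 1" .
  have zp: "z ^ p = 1"
    using ee_nat_mult[of p "real n / p"] p0 ee_nat[of n] by (simp add: z_def)
  have z1: "z = 1 \<longleftrightarrow> p dvd n"
  proof -
    have "z = exp (2 * complex_of_real pi * \<i> * complex_of_nat n / complex_of_nat p)"
      by (simp add: z_def ee_def)
    then show ?thesis using complex_root_unity_eq_1[of p n] p0 by simp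
  qed
  show ?thesis
  proof (cases "p dvd n")
    case True then show ?thesis using A z1 by simp
  next
    case False
    then have "z \<noteq> 1" using z1 by simp
    then have "(\<Sum>k<p. z ^ k) = 0" using geometric_sum[of z p] zp by simp
    then show ?thesis using A False by simp
  qed
qed

lemma rs_sqf:
  assumes "finite B" "\<forall>p\<in>B. prime p"
  shows "ramanujan_sum (\<Prod>B) n = (\<Prod>p\<in>B. ramanujan_sum p n)"
  using assms
proof (induction B rule: finite_induct)
  case empty
  have "ramanujan_sum 1 n = 1" using rs_RR[of 1 n] by (simp add: RR_def ee_0)
  then show ?case by simp
next
  case (insert p B)
  have "coprime p (\<Prod>B)" using insert coprime_prime_prod by auto
  moreover have "p > 0" using insert prime_gt_0_nat by auto
  moreover have "\<Prod>B > 0" using insert.prems by (intro prod_primes_pos) auto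
  ultimately show ?case using insert by (simp add: rs_mult)
qed



definition al :: "real \<Rightarrow> nat \<Rightarrow> real" where
  "al \<sigma> q = \<bar>real_of_int (mu q)\<bar> / (real q powr (\<sigma> - 1) * real (totient q))"

definition rsp :: "nat \<Rightarrow> nat \<Rightarrow> real" where
  "rsp m p = (if p dvd m then real p - 1 else -1)"

definition kap :: "nat \<Rightarrow> nat \<Rightarrow> real" where
  "kap n q = (\<Prod>p\<in>prime_factors q. if p dvd n then real p else 1)"

lemma al_nonneg: "al \<sigma> q \<ge> 0" unfolding al_def by simp

lemma cmod_coef: "cmod (coef s q) = al (Re s) q"
proof -
  have "cmod (of_nat q powr (s - 1)) = real q powr (Re s - 1)"
    using norm_powr_real_powr[of "of_nat q" "s - 1"] by simp
  then show ?thesis unfolding coef_def al_def by (simp add: norm_divide norm_mult)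
qed

lemma coef_cnj: "coef (cnj s) q = cnj (coef s q)"
proof -
  have "cnj (of_nat q powr (s - 1)) = of_nat q powr (cnj s - 1)"
    using cnj_powr[of "of_nat q" "s - 1"] by simp
  then show ?thesis unfolding coef_def by simp
qed

lemma totient_sqf:
  assumes "finite B" "\<forall>p\<in>B. prime p"
  shows "real (totient (\<Prod>B)) = (\<Prod>p\<in>B. real p - 1)"
  using assms
proof (induction B rule: finite_induct)
  case empty then show ?case by simp
next
  case (insert p B)
  have "coprime p (\<Prod>B)" using insert coprime_prime_prod by auto
  then have "totient (\<Prod>(insert p B)) = totient p * totient (\<Prod>B)"
    using insert by (simp add: totient_mult_coprime)
  moreover have "p \<ge> 1" using insert prime_ge_1_nat by auto
  then have "real (totient p) = real p - 1" using insert
    by (simp add: totient_prime of_nat_diff)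
  ultimately show ?case using insert by simp
qed

lemma mu_sqf:
  assumes "finite B" "\<forall>p\<in>B. prime p"
  shows "\<bar>real_of_int (mu (\<Prod>B))\<bar> = 1"
  using sqf_prod[OF assms] prod_primes_pos[OF assms(2)] unfolding mu_def by simp

lemma al_sqf:
  assumes "finite B" "\<forall>p\<in>B. prime p"
  shows "al \<sigma> (\<Prod>B) = (\<Prod>p\<in>B. 1 / (real p powr (\<sigma> - 1) * (real p - 1)))"
proof -
  have "real (\<Prod>B) powr (\<sigma> - 1) = (\<Prod>p\<in>B. real p powr (\<sigma> - 1))"
    by (simp add: prod_powr_distrib)
  then show ?thesis unfolding al_def using mu_sqf[OF assms] totient_sqf[OF assms]
    by (simp add: prod_dividef prod.distrib)
qed

lemma al_prime:
  assumes "prime p"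
  shows "al \<sigma> p = 1 / (real p powr (\<sigma> - 1) * (real p - 1))"
  using al_sqf[of "{p}" \<sigma>] assms by simp

lemma al_nonsqf: "\<not> squarefree q \<Longrightarrow> al \<sigma> q = 0"
  unfolding al_def mu_def by simp

lemma al_0: "al \<sigma> 0 = 0"
  unfolding al_def mu_def by simp

lemma rs_sqf_real:
  assumes "q > 0" "squarefree q"
  shows "ramanujan_sum q m = of_real (\<Prod>p\<in>prime_factors q. rsp m p)"
proof -
  have "ramanujan_sum q m = ramanujan_sum (\<Prod>(prime_factors q)) m" using prod_pf assms by simp
  also have "... = (\<Prod>p\<in>prime_factors q. ramanujan_sum p m)" by (rule rs_sqf) auto
  also have "... = (\<Prod>p\<in>prime_factors q. of_real (rsp m p))"
  proof (rule prod.cong[OF refl])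
    fix p assume "p \<in> prime_factors q"
    then have "prime p" by auto
    then show "ramanujan_sum p m = of_real (rsp m p)" by (simp add: rs_prime rsp_def)
  qed
  finally show ?thesis by simp
qed

lemma rs_bound:
  assumes "q > 0" "squarefree q"
  shows "cmod (ramanujan_sum q n) \<le> kap n q"
proof -
  have "cmod (ramanujan_sum q n) = (\<Prod>p\<in>prime_factors q. \<bar>rsp n p\<bar>)"
    using rs_sqf_real[OF assms, of n] by (simp add: prod_norm[symmetric])
  also have "... \<le> kap n q" unfolding kap_def
  proof (rule prod_mono)
    fix p assume "p \<in> prime_factors q"
    then have "p \<ge> 2" using prime_ge_2_nat by auto
    then show "0 \<le> \<bar>rsp n p\<bar> \<and> \<bar>rsp n p\<bar> \<le> (if p dvd n then real p else 1)"
      by (auto simp: rsp_def)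
  qed
  finally show ?thesis .
qed

lemma kap_sqf:
  assumes "finite B" "\<forall>p\<in>B. prime p"
  shows "kap n (\<Prod>B) = (\<Prod>p\<in>B. if p dvd n then real p else 1)"
  unfolding kap_def using pf_prod[OF assms] by simp

lemma kap_ge1: "kap n q \<ge> 1"
  unfolding kap_def
proof (rule prod_ge_1)
  fix p assume "p \<in> prime_factors q"
  then have "p \<ge> 1" using prime_ge_1_nat by auto
  then show "1 \<le> (if p dvd n then real p else 1)" by auto
qed



lemma PA_primes: "\<forall>p\<in>PA N. prime p" by (simp add: PA_def)

lemma image_Pow_sub: "(\<lambda>B. \<Prod>B) ` Pow (PA N) \<subseteq> {1..}"
proof
  fix q assume "q \<in> (\<lambda>B. \<Prod>B) ` Pow (PA N)"
  then obtain B where "B \<subseteq> PA N" "q = \<Prod>B" by auto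
  then have "q > 0" using prod_primes_pos PA_primes by (metis subsetD)
  then show "q \<in> {1..}" by simp
qed

lemma sum_image_Pow:
  "(\<Sum>q\<in>(\<lambda>B. \<Prod>B) ` Pow (PA N). h q) = (\<Sum>B\<in>Pow (PA N). h (\<Prod>B))"
  by (simp add: sum.reindex prod_inj_Pow PA_primes)

lemma euler_bound:
  fixes G :: "nat \<Rightarrow> real" and x :: "nat \<Rightarrow> real"
  assumes x0: "\<And>p. prime p \<Longrightarrow> x p \<ge> 0"
    and Gsqf: "\<And>B. finite B \<Longrightarrow> \<forall>p\<in>B. prime p \<Longrightarrow> \<bar>G (\<Prod>B)\<bar> \<le> (\<Prod>p\<in>B. x p)"
    and Gnon: "\<And>q. q > 0 \<Longrightarrow> \<not> squarefree q \<Longrightarrow> G q = 0"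
  shows "(\<Sum>q\<in>{1..N}. \<bar>G q\<bar>) \<le> (\<Prod>p\<in>PA N. 1 + x p)"
proof -
  let ?I = "(\<lambda>B. \<Prod>B) ` Pow (PA N)"
  have "(\<Sum>q\<in>{1..N}. \<bar>G q\<bar>) = (\<Sum>q\<in>{q\<in>{1..N}. squarefree q}. \<bar>G q\<bar>)"
    by (rule sum.mono_neutral_right) (auto simp: Gnon)
  also have "... \<le> (\<Sum>q\<in>?I. \<bar>G q\<bar>)"
  proof (rule sum_mono2)
    show "{q \<in> {1..N}. squarefree q} \<subseteq> ?I"
    proof
      fix q assume "q \<in> {q \<in> {1..N}. squarefree q}"
      then show "q \<in> ?I" using sqf_in_image[OF PA_primes PA_finite, of q N] pf_sub_PA[of q N] by auto
    qed
  qed auto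
  also have "... = (\<Sum>B\<in>Pow (PA N). \<bar>G (\<Prod>B)\<bar>)" by (rule sum_image_Pow)
  also have "... \<le> (\<Sum>B\<in>Pow (PA N). \<Prod>p\<in>B. x p)"
  proof (rule sum_mono)
    fix B assume "B \<in> Pow (PA N)"
    then have "finite B" using PA_finite[of N] finite_subset by blast
    moreover have "\<forall>p\<in>B. prime p" using \<open>B \<in> Pow (PA N)\<close> PA_primes by blast
    ultimately
    show "\<bar>G (\<Prod>B)\<bar> \<le> (\<Prod>p\<in>B. x p)" by (rule Gsqf)
  qed
  also have "... = (\<Prod>p\<in>PA N. x p + 1)" by (simp add: prod_add)
  finally show ?thesis by (simp add: add.commute)
qed

lemma euler_bound_exp:
  fixes G :: "nat \<Rightarrow> real" and x :: "nat \<Rightarrow> real"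
  assumes x0: "\<And>p. prime p \<Longrightarrow> x p \<ge> 0"
    and Gsqf: "\<And>B. finite B \<Longrightarrow> \<forall>p\<in>B. prime p \<Longrightarrow> \<bar>G (\<Prod>B)\<bar> \<le> (\<Prod>p\<in>B. x p)"
    and Gnon: "\<And>q. q > 0 \<Longrightarrow> \<not> squarefree q \<Longrightarrow> G q = 0"
    and X: "\<And>N. (\<Sum>p\<in>PA N. x p) \<le> X"
  shows "(\<Sum>q\<in>{1..N}. \<bar>G q\<bar>) \<le> exp X"
proof -
  have "(\<Sum>q\<in>{1..N}. \<bar>G q\<bar>) \<le> (\<Prod>p\<in>PA N. 1 + x p)" by (rule euler_bound[OF x0 Gsqf Gnon])
  also have "... \<le> exp (\<Sum>p\<in>PA N. x p)" by (rule prod_le_exp_sum) (auto simp: PA_def x0)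
  also have "... \<le> exp X" using X by simp
  finally show ?thesis .
qed

lemma sum_Suc_atLeast: "(\<Sum>q<N. f (Suc q)) = (\<Sum>q\<in>{1..N}. f q)"
  using sum.atLeast1_atMost_eq[of f N] by (simp add: atLeastAtMost_def)

lemma euler_summable:
  fixes G :: "nat \<Rightarrow> real" and x :: "nat \<Rightarrow> real"
  assumes x0: "\<And>p. prime p \<Longrightarrow> x p \<ge> 0"
    and Gsqf: "\<And>B. finite B \<Longrightarrow> \<forall>p\<in>B. prime p \<Longrightarrow> \<bar>G (\<Prod>B)\<bar> \<le> (\<Prod>p\<in>B. x p)"
    and Gnon: "\<And>q. q > 0 \<Longrightarrow> \<not> squarefree q \<Longrightarrow> G q = 0"
    and X: "\<And>N. (\<Sum>p\<in>PA N. x p) \<le> X"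
  shows "summable (\<lambda>q. \<bar>G (Suc q)\<bar>)" "(\<Sum>q. \<bar>G (Suc q)\<bar>) \<le> exp X"
    "\<And>F. finite F \<Longrightarrow> F \<subseteq> {1..} \<Longrightarrow> (\<Sum>q\<in>F. \<bar>G q\<bar>) \<le> exp X"
proof -
  have B: "(\<Sum>q<n. \<bar>G (Suc q)\<bar>) \<le> exp X" for n
    using euler_bound_exp[OF x0 Gsqf Gnon X, of n] sum_Suc_atLeast[of "\<lambda>q. \<bar>G q\<bar>" n] by simp
  show S: "summable (\<lambda>q. \<bar>G (Suc q)\<bar>)" by (rule summableI_nonneg_bounded[OF _ B]) auto
  show "(\<Sum>q. \<bar>G (Suc q)\<bar>) \<le> exp X" by (rule suminf_le_const[OF S B])
  fix F :: "nat set" assume F: "finite F" "F \<subseteq> {1..}"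
  have "(\<Sum>q\<in>F. \<bar>G q\<bar>) \<le> (\<Sum>q\<in>{1..Max (insert 0 F)}. \<bar>G q\<bar>)"
  proof (rule sum_mono2)
    show "F \<subseteq> {1..Max (insert 0 F)}"
    proof
      fix q assume "q \<in> F"
      then show "q \<in> {1..Max (insert 0 F)}" using F by (simp add: subset_eq)
    qed
  qed (use F in auto)
  also have "... \<le> exp X" by (rule euler_bound_exp[OF x0 Gsqf Gnon X])
  finally show "(\<Sum>q\<in>F. \<bar>G q\<bar>) \<le> exp X" .
qed



lemma tail_bound:
  fixes G :: "nat \<Rightarrow> real"
  assumes summ: "summable (\<lambda>q. \<bar>G (Suc q)\<bar>)" and F: "finite F" "\<forall>q\<in>F. q > N"
  shows "(\<Sum>q\<in>F. \<bar>G q\<bar>) \<le> (\<Sum>k. \<bar>G (Suc (k + N))\<bar>)"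
proof -
  let ?h = "\<lambda>q. q - Suc N"
  have inj: "inj_on ?h F"
  proof (rule inj_onI)
    fix a b assume ab: "a \<in> F" "b \<in> F" "a - Suc N = b - Suc N"
    then have "a > N" "b > N" using F by auto
    then show "a = b" using ab(3) by arith
  qed
  have "(\<Sum>k\<in>?h ` F. \<bar>G (Suc (k + N))\<bar>) = (\<Sum>q\<in>F. \<bar>G (Suc (q - Suc N + N))\<bar>)"
    by (simp add: sum.reindex[OF inj])
  also have "... = (\<Sum>q\<in>F. \<bar>G q\<bar>)"
  proof (rule sum.cong[OF refl])
    fix x assume "x \<in> F"
    then have "x > N" using F by auto
    then have "Suc (x - Suc N + N) = x" by arith
    then show "\<bar>G (Suc (x - Suc N + N))\<bar> = \<bar>G x\<bar>" by simp
  qed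
  finally have "(\<Sum>q\<in>F. \<bar>G q\<bar>) = (\<Sum>k\<in>?h ` F. \<bar>G (Suc (k + N))\<bar>)" by simp
  also have "... \<le> (\<Sum>k. \<bar>G (Suc (k + N))\<bar>)"
  proof (rule sum_le_suminf)
    show "summable (\<lambda>k. \<bar>G (Suc (k + N))\<bar>)"
      using summ summable_iff_shift[of "\<lambda>q. \<bar>G (Suc q)\<bar>" N] by simp
  next
    show "finite (?h ` F)" using F by simp
  next
    fix n show "0 \<le> \<bar>G (Suc (n + N))\<bar>" by simp
  qed
  finally show ?thesis .
qed

lemma euler_exact:
  fixes G :: "nat \<Rightarrow> real" and g :: "nat \<Rightarrow> real"
  assumes Gsqf: "\<And>B. finite B \<Longrightarrow> \<forall>p\<in>B. prime p \<Longrightarrow> G (\<Prod>B) = (\<Prod>p\<in>B. g p)"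
    and Gnon: "\<And>q. q > 0 \<Longrightarrow> \<not> squarefree q \<Longrightarrow> G q = 0"
    and summ: "summable (\<lambda>q. \<bar>G (Suc q)\<bar>)"
  shows "(\<lambda>N. \<Prod>p\<in>PA N. 1 + g p) \<longlonglongrightarrow> (\<Sum>q. G (Suc q))"
proof -
  define S where "S = (\<Sum>q. G (Suc q))"
  define T where "T = (\<lambda>N. (\<Sum>k. \<bar>G (Suc (k + N))\<bar>))"
  have sG: "summable (\<lambda>q. G (Suc q))" by (rule summable_rabs_cancel[OF summ])
  have T0: "T \<longlonglongrightarrow> 0" unfolding T_def using suminf_exist_split2[OF summ] .
  have bound: "\<bar>(\<Prod>p\<in>PA N. 1 + g p) - S\<bar> \<le> 2 * T N" for N
  proof -
    let ?I = "(\<lambda>B. \<Prod>B) ` Pow (PA N)"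
    have fI: "finite ?I" by simp
    have "(\<Prod>p\<in>PA N. 1 + g p) = (\<Sum>B\<in>Pow (PA N). \<Prod>p\<in>B. g p)"
      using prod_add[of "PA N" g "\<lambda>_. 1"] by (simp add: add.commute)
    also have "... = (\<Sum>B\<in>Pow (PA N). G (\<Prod>B))"
    proof (rule sum.cong[OF refl])
      fix B assume "B \<in> Pow (PA N)"
      then have "finite B" using PA_finite[of N] finite_subset by blast
      moreover have "\<forall>p\<in>B. prime p" using \<open>B \<in> Pow (PA N)\<close> PA_primes by blast
      ultimately show "(\<Prod>p\<in>B. g p) = G (\<Prod>B)" using Gsqf by simp
    qed
    also have "... = (\<Sum>q\<in>?I. G q)" by (rule sum_image_Pow[symmetric])
    also have "... = (\<Sum>q\<in>?I \<inter> {1..N}. G q) + (\<Sum>q\<in>?I - {1..N}. G q)"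
      by (rule sum.Int_Diff[OF fI])
    also have "(\<Sum>q\<in>?I \<inter> {1..N}. G q) = (\<Sum>q\<in>{1..N}. G q)"
    proof (rule sum.mono_neutral_left)
      show "\<forall>i\<in>{1..N} - ?I \<inter> {1..N}. G i = 0"
      proof
        fix q assume q: "q \<in> {1..N} - ?I \<inter> {1..N}"
        show "G q = 0"
        proof (rule ccontr)
          assume "G q \<noteq> 0"
          moreover have "q > 0" using q by simp
          ultimately have "squarefree q" using Gnon by blast
          moreover have "q \<le> N" using q by simp
          ultimately have "q \<in> ?I"
            using sqf_in_image[OF PA_primes PA_finite, of q N] pf_sub_PA[of q N] \<open>q > 0\<close> by blast
          then show False using q by blast
        qed
      qed
    next
      show "finite {1..N}" by simp
    next
      show "?I \<inter> {1..N} \<subseteq> {1..N}" by blast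
    qed
    also have "(\<Sum>q\<in>{1..N}. G q) = (\<Sum>q<N. G (Suc q))" by (rule sum_Suc_atLeast[symmetric])
    finally have A: "(\<Prod>p\<in>PA N. 1 + g p) = (\<Sum>q<N. G (Suc q)) + (\<Sum>q\<in>?I - {1..N}. G q)" .
    have B: "S = (\<Sum>k. G (Suc (k + N))) + (\<Sum>q<N. G (Suc q))"
      unfolding S_def using suminf_split_initial_segment[OF sG, of N] by simp
    have C: "\<bar>\<Sum>k. G (Suc (k + N))\<bar> \<le> T N"
    proof -
      have s1: "summable (\<lambda>k. \<bar>G (Suc (k + N))\<bar>)"
        using summ summable_iff_shift[of "\<lambda>q. \<bar>G (Suc q)\<bar>" N] by simp
      then show ?thesis unfolding T_def using summable_rabs[OF s1] by simp
    qed
    have D: "\<bar>\<Sum>q\<in>?I - {1..N}. G q\<bar> \<le> T N"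
    proof -
      have "\<bar>\<Sum>q\<in>?I - {1..N}. G q\<bar> \<le> (\<Sum>q\<in>?I - {1..N}. \<bar>G q\<bar>)" by (rule sum_abs)
      also have "... \<le> T N" unfolding T_def
      proof (rule tail_bound[OF summ])
        show "\<forall>q\<in>?I - {1..N}. N < q"
        proof
          fix q assume q: "q \<in> ?I - {1..N}"
          then have "q \<ge> 1" using image_Pow_sub[of N] by auto
          then show "N < q" using q by auto
        qed
      qed simp
      finally show ?thesis .
    qed
    show ?thesis using A B C D by linarith
  qed
  have "(\<lambda>N. (\<Prod>p\<in>PA N. 1 + g p) - S) \<longlonglongrightarrow> 0"
  proof (rule Lim_null_comparison)
    show "\<forall>\<^sub>F N in sequentially. norm ((\<Prod>p\<in>PA N. 1 + g p) - S) \<le> 2 * T N"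
      using bound by simp
    show "(\<lambda>N. 2 * T N) \<longlonglongrightarrow> 0" using tendsto_mult_right_zero[OF T0] by simp
  qed
  then show ?thesis unfolding S_def by (simp add: LIM_zero_iff)
qed



definition gsp :: "nat \<Rightarrow> real \<Rightarrow> nat \<Rightarrow> real" where
  "gsp m \<sigma> q = (al \<sigma> q)^2 * (if q > 0 \<and> squarefree q then (\<Prod>p\<in>prime_factors q. rsp m p) else 0)"

lemma spec_term:
  assumes "q > 0"
  shows "complex_of_real ((cmod (coef s q))\<^sup>2) * ramanujan_sum q m = of_real (gsp m (Re s) q)"
proof (cases "squarefree q")
  case True
  then show ?thesis using rs_sqf_real[OF assms True, of m] assms
    by (simp add: gsp_def cmod_coef)
next
  case False
  then show ?thesis by (simp add: gsp_def cmod_coef al_nonsqf)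
qed

lemma gsp_sqf:
  assumes "finite B" "\<forall>p\<in>B. prime p"
  shows "gsp m \<sigma> (\<Prod>B) = (\<Prod>p\<in>B. (al \<sigma> p)^2 * rsp m p)"
proof -
  have "al \<sigma> (\<Prod>B) = (\<Prod>p\<in>B. al \<sigma> p)"
    using al_sqf[OF assms] assms(2) by (simp add: al_prime)
  then have "(al \<sigma> (\<Prod>B))^2 = (\<Prod>p\<in>B. (al \<sigma> p)^2)" by (simp add: prod_power_distrib)
  moreover have "\<Prod>B > 0" using prod_primes_pos[OF assms(2)] .
  ultimately show ?thesis using sqf_prod[OF assms] pf_prod[OF assms]
    by (simp add: gsp_def prod.distrib)
qed

lemma gsp_non: "q > 0 \<Longrightarrow> \<not> squarefree q \<Longrightarrow> gsp m \<sigma> q = 0"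
  by (simp add: gsp_def)

lemma al_prime_sq:
  assumes "prime p"
  shows "(al \<sigma> p)^2 = 1 / (real p powr (2*\<sigma> - 2) * (real p - 1)^2)"
proof -
  have p: "real p > 0" using assms prime_gt_0_nat by simp
  have "(real p powr (\<sigma> - 1))^2 = real p powr (2*\<sigma> - 2)"
    using powr_power[of "real p" "\<sigma> - 1" 2] p by (simp add: algebra_simps)
  then show ?thesis using al_prime[OF assms, of \<sigma>] by (simp add: power_mult_distrib power_divide)
qed

lemma frac_cancel1:
  assumes "P > 0" "d > (0::real)"
  shows "d / (P * d^2) = 1 / (P * d)"
  using assms by (simp add: power2_eq_square)

lemma ef_eq:
  assumes "prime p"
  shows "1 + (al \<sigma> p)^2 * rsp m p = euler_factor m \<sigma> p"
proof -
  have p2: "real p \<ge> 2" using prime_ge_2_nat[OF assms] by simp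
  have P: "real p powr (2*\<sigma> - 2) > 0" using p2 by simp
  have d: "real p - 1 > 0" using p2 by simp
  show ?thesis
  proof (cases "p dvd m")
    case True
    then show ?thesis using assms frac_cancel1[OF P d]
      unfolding al_prime_sq[OF assms] euler_factor_def rsp_def by simp
  next
    case False
    then show ?thesis using assms
      unfolding al_prime_sq[OF assms] euler_factor_def rsp_def by simp
  qed
qed

lemma gp_bound:
  assumes "prime p" "\<sigma> \<ge> 1"
  shows "\<bar>(al \<sigma> p)^2 * rsp m p\<bar> \<le> (if p dvd m then 1 else 0) + 1 / (real p - 1)^2"
proof -
  have p2: "real p \<ge> 2" using prime_ge_2_nat[OF assms(1)] by simp
  define P where "P = real p powr (2*\<sigma> - 2)"
  have P1: "P \<ge> 1" using p2 assms(2) by (simp add: P_def ge_one_powr_ge_zero)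
  have d: "real p - 1 > 0" using p2 by simp
  have A: "(al \<sigma> p)^2 = 1 / (P * (real p - 1)^2)" using al_prime_sq[OF assms(1)] by (simp add: P_def)
  show ?thesis
  proof (cases "p dvd m")
    case True
    have "\<bar>(al \<sigma> p)^2 * rsp m p\<bar> = \<bar>(real p - 1) / (P * (real p - 1)^2)\<bar>"
      using True unfolding A rsp_def by simp
    also have "... = 1 / (P * (real p - 1))" using frac_cancel1[of P "real p - 1"] P1 d by simp
    also have "... \<le> 1"
    proof -
      have "P * (real p - 1) \<ge> 1 * 1" using P1 p2 by (intro mult_mono) auto
      then show ?thesis by simp
    qed
    finally have "\<bar>(al \<sigma> p)^2 * rsp m p\<bar> \<le> 1" .
    moreover have "1 / (real p - 1)^2 \<ge> 0" by simp
    moreover have "(if p dvd m then 1 else 0) = (1::real)" using True by simp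
    ultimately show ?thesis by linarith
  next
    case False
    have "\<bar>(al \<sigma> p)^2 * rsp m p\<bar> = 1 / (P * (real p - 1)^2)"
      using False p2 P1 unfolding A rsp_def by simp
    also have "... \<le> 1 / (real p - 1)^2"
      using P1 p2 by (intro divide_left_mono) (auto simp: mult_le_cancel_right1)
    finally show ?thesis using False by simp
  qed
qed

lemma inv_sq_sum: "N \<ge> 1 \<Longrightarrow> (\<Sum>k\<in>{1..N}. 1 / (real k)^2) \<le> 2 - 1 / real N"
proof (induction N rule: dec_induct)
  case base then show ?case by simp
next
  case (step n)
  have "(\<Sum>k\<in>{1..Suc n}. 1 / (real k)^2) = (\<Sum>k\<in>{1..n}. 1 / (real k)^2) + 1 / (real (Suc n))^2"
    by simp
  also have "... \<le> 2 - 1 / real n + 1 / (real (Suc n))^2" using step by simp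
  also have "... \<le> 2 - 1 / real (Suc n)"
  proof -
    have n: "real n \<ge> 1" using step by simp
    have e: "1 / real n - 1 / real (Suc n) = 1 / (real n * real (Suc n))"
      using n by (simp add: field_simps)
    have "1 / (real (Suc n))^2 \<le> 1 / (real n * real (Suc n))"
      using n by (intro divide_left_mono) (auto simp: power2_eq_square)
    then have "1 / (real (Suc n))^2 \<le> 1 / real n - 1 / real (Suc n)" using e by simp
    then show ?thesis by simp
  qed
  finally show ?case .
qed

lemma inv_sq_primes: "(\<Sum>p\<in>PA N. 1 / (real p - 1)^2) \<le> 2"
proof -
  let ?h = "\<lambda>p. p - 1"
  have inj: "inj_on ?h (PA N)"
  proof (rule inj_onI)
    fix a b assume "a \<in> PA N" "b \<in> PA N" "a - 1 = b - 1"
    then have "a \<ge> 2" "b \<ge> 2" "a - 1 = b - 1" by (auto simp: PA_def prime_ge_2_nat)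
    then show "a = b" by arith
  qed
  have "(\<Sum>p\<in>PA N. 1 / (real p - 1)^2) = (\<Sum>p\<in>PA N. 1 / (real (p - 1))^2)"
  proof (rule sum.cong[OF refl])
    fix p assume "p \<in> PA N"
    then have "p \<ge> 1" by (auto simp: PA_def dest: prime_gt_0_nat)
    then show "1 / (real p - 1)^2 = 1 / (real (p - 1))^2" by (simp add: of_nat_diff)
  qed
  also have "... = (\<Sum>k\<in>?h ` PA N. 1 / (real k)^2)"
    using sum.reindex[OF inj, of "\<lambda>k. 1 / (real k)^2"] by (simp add: o_def)
  also have "... \<le> (\<Sum>k\<in>{1..N}. 1 / (real k)^2)"
  proof (rule sum_mono2)
    show "?h ` PA N \<subseteq> {1..N}"
    proof
      fix k assume "k \<in> ?h ` PA N"
      then obtain p where "p \<in> PA N" "k = p - 1" by blast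
      then have "p \<ge> 2" "p \<le> N" "k = p - 1" by (auto simp: PA_def prime_ge_2_nat)
      then show "k \<in> {1..N}" by auto
    qed
  qed auto
  also have "... \<le> 2"
  proof (cases "N \<ge> 1")
    case True
    have "1 / real N \<ge> 0" by simp
    then show ?thesis using inv_sq_sum[OF True] by linarith
  next
    case False then show ?thesis by simp
  qed
  finally show ?thesis .
qed

lemma card_dvd_primes: "m > 0 \<Longrightarrow> (\<Sum>p\<in>PA N. (if p dvd m then 1 else 0::real)) \<le> real (card (prime_factors m))"
proof -
  assume m: "m > 0"
  have "(\<Sum>p\<in>PA N. (if p dvd m then 1 else 0::real)) = real (card {p\<in>PA N. p dvd m})"
  proof -
    have "{p\<in>PA N. p dvd m} = PA N \<inter> {p. p dvd m}" by blast
    then show ?thesis by (simp add: sum.If_cases)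
  qed
  also have "card {p\<in>PA N. p dvd m} \<le> card (prime_factors m)"
  proof (rule card_mono)
    show "{p \<in> PA N. p dvd m} \<subseteq> prime_factors m" using m by (auto simp: PA_def in_prime_factors_iff)
  qed simp
  finally show ?thesis by simp
qed



definition xsp :: "nat \<Rightarrow> nat \<Rightarrow> real" where
  "xsp m p = (if p dvd m then 1 else 0) + 1 / (real p - 1)^2"

lemma spec_summable:
  assumes "\<sigma> \<ge> 1" "m > 0"
  shows "summable (\<lambda>q. \<bar>gsp m \<sigma> (Suc q)\<bar>)"
proof (rule euler_summable(1)[of "xsp m" "gsp m \<sigma>" "real (card (prime_factors m)) + 2"])
  fix p :: nat assume "prime p" then show "0 \<le> xsp m p" by (simp add: xsp_def)
next
  fix B :: "nat set" assume B: "finite B" "\<forall>p\<in>B. prime p"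
  have "\<bar>gsp m \<sigma> (\<Prod>B)\<bar> = (\<Prod>p\<in>B. \<bar>(al \<sigma> p)^2 * rsp m p\<bar>)"
    using gsp_sqf[OF B] by (simp add: abs_prod)
  also have "... \<le> (\<Prod>p\<in>B. xsp m p)"
    by (rule prod_mono) (use B gp_bound assms(1) in \<open>auto simp: xsp_def\<close>)
  finally show "\<bar>gsp m \<sigma> (\<Prod>B)\<bar> \<le> (\<Prod>p\<in>B. xsp m p)" .
next
  fix q :: nat assume "q > 0" "\<not> squarefree q" then show "gsp m \<sigma> q = 0" by (rule gsp_non)
next
  fix N
  have "(\<Sum>p\<in>PA N. xsp m p) = (\<Sum>p\<in>PA N. (if p dvd m then 1 else 0::real)) + (\<Sum>p\<in>PA N. 1 / (real p - 1)^2)"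
    unfolding xsp_def by (rule sum.distrib)
  then show "(\<Sum>p\<in>PA N. xsp m p) \<le> real (card (prime_factors m)) + 2"
    using card_dvd_primes[OF assms(2), of N] inv_sq_primes[of N] by linarith
qed

lemma spec_eq:
  assumes "Re s \<ge> 1" "m > 0"
  shows "spectrum m s = of_real (\<Sum>q. gsp m (Re s) (Suc q))"
proof -
  have S: "summable (\<lambda>q. gsp m (Re s) (Suc q))"
    by (rule summable_rabs_cancel[OF spec_summable[OF assms]])
  have "spectrum m s = (\<Sum>q. complex_of_real (gsp m (Re s) (Suc q)))"
    unfolding spectrum_def by (subst spec_term) auto
  also have "... = of_real (\<Sum>q. gsp m (Re s) (Suc q))" by (rule suminf_of_real[OF S, symmetric])
  finally show ?thesis .
qed

lemma spec_lim:
  assumes "\<sigma> \<ge> 1" "m > 0"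
  shows "(\<lambda>N. \<Prod>p\<in>PA N. euler_factor m \<sigma> p) \<longlonglongrightarrow> (\<Sum>q. gsp m \<sigma> (Suc q))"
proof -
  have "(\<lambda>N. \<Prod>p\<in>PA N. 1 + (al \<sigma> p)^2 * rsp m p) \<longlonglongrightarrow> (\<Sum>q. gsp m \<sigma> (Suc q))"
  proof (rule euler_exact)
    fix B :: "nat set" assume "finite B" "\<forall>p\<in>B. prime p"
    then show "gsp m \<sigma> (\<Prod>B) = (\<Prod>p\<in>B. (al \<sigma> p)^2 * rsp m p)" by (rule gsp_sqf)
  next
    fix q :: nat assume "q > 0" "\<not> squarefree q" then show "gsp m \<sigma> q = 0" by (rule gsp_non)
  next
    show "summable (\<lambda>q. \<bar>gsp m \<sigma> (Suc q)\<bar>)" by (rule spec_summable[OF assms])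
  qed
  moreover have "(\<Prod>p\<in>PA N. 1 + (al \<sigma> p)^2 * rsp m p) = (\<Prod>p\<in>PA N. euler_factor m \<sigma> p)" for N
    by (rule prod.cong[OF refl]) (simp add: ef_eq PA_def)
  ultimately show ?thesis by simp
qed

lemma prod_inv_sq: "N \<ge> 1 \<Longrightarrow> (\<Prod>k\<in>{2..N}. 1 - 1 / (real k)^2) = (real N + 1) / (2 * real N)"
proof (induction N rule: dec_induct)
  case base then show ?case by simp
next
  case (step n)
  have "{2..Suc n} = insert (Suc n) {2..n}" using step by auto
  then have "(\<Prod>k\<in>{2..Suc n}. 1 - 1 / (real k)^2) = (1 - 1 / (real (Suc n))^2) * (\<Prod>k\<in>{2..n}. 1 - 1 / (real k)^2)"
    by simp
  also have "... = (1 - 1 / (real n + 1)^2) * ((real n + 1) / (2 * real n))" using step by simp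
  also have "... = (real (Suc n) + 1) / (2 * real (Suc n))"
  proof -
    have n: "real n \<ge> 1" using step by simp
    then show ?thesis by (simp add: divide_simps power2_eq_square) (simp add: algebra_simps)
  qed
  finally show ?case .
qed

lemma prod_inv_sq_half: "(\<Prod>k\<in>{2..N}. 1 - 1 / (real k)^2) \<ge> 1/2"
proof (cases "N \<ge> 1")
  case True
  have "(real N + 1) / (2 * real N) \<ge> 1/2" using True by (simp add: field_simps)
  then show ?thesis using prod_inv_sq[OF True] by simp
next
  case False then show ?thesis by simp
qed

lemma ef_ge:
  assumes "prime p" "p \<noteq> 2" "\<sigma> \<ge> 1"
  shows "euler_factor m \<sigma> p \<ge> 1 - 1 / (real p - 1)^2" "1 - 1 / (real p - 1)^2 \<ge> 0"
proof -
  have p3: "real p \<ge> 3" using prime_ge_2_nat[OF assms(1)] assms(2) by simp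
  have P1: "real p powr (2*\<sigma> - 2) \<ge> 1" using p3 assms(3) by (simp add: ge_one_powr_ge_zero)
  have "real p - 1 \<ge> 2" using p3 by simp
  then have "2^2 \<le> (real p - 1)^2" by (intro power_mono) auto
  then have d: "(real p - 1)^2 \<ge> 4" by simp
  show "1 - 1 / (real p - 1)^2 \<ge> 0" using d by (simp add: divide_le_eq)
  show "euler_factor m \<sigma> p \<ge> 1 - 1 / (real p - 1)^2"
  proof (cases "p dvd m")
    case True
    have "1 / (real p powr (2 * \<sigma> - 2) * (real p - 1)) \<ge> 0" using p3 by simp
    then have "euler_factor m \<sigma> p \<ge> 1" using True assms(1) by (simp add: euler_factor_def)
    moreover have "1 / (real p - 1)^2 \<ge> 0" by simp
    ultimately show ?thesis by linarith
  next
    case False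
    have pos: "(real p - 1)^2 > 0" using p3 by simp
    have "1 / (real p powr (2 * \<sigma> - 2) * (real p - 1)^2) \<le> 1 / (real p - 1)^2"
      using P1 pos p3 by (intro divide_left_mono) (auto simp: mult_le_cancel_right1 intro!: mult_pos_pos)
    then show ?thesis using False assms(1) by (simp add: euler_factor_def)
  qed
qed

lemma ef_le:
  assumes "prime p" "p \<noteq> 2" "\<sigma> \<ge> 1"
  shows "euler_factor m \<sigma> p \<le> (if p dvd m then 2 else 1)"
proof -
  have p3: "real p \<ge> 3" using prime_ge_2_nat[OF assms(1)] assms(2) by simp
  have P1: "real p powr (2*\<sigma> - 2) \<ge> 1" using p3 assms(3) by (simp add: ge_one_powr_ge_zero)
  show ?thesis
  proof (cases "p dvd m")
    case True
    have "real p powr (2 * \<sigma> - 2) * (real p - 1) \<ge> 1 * 1" using P1 p3 by (intro mult_mono) auto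
    then have "1 / (real p powr (2 * \<sigma> - 2) * (real p - 1)) \<le> 1" by simp
    then show ?thesis using True assms(1) by (simp add: euler_factor_def)
  next
    case False
    have "1 / (real p powr (2 * \<sigma> - 2) * (real p - 1)^2) \<ge> 0" using p3 by simp
    then show ?thesis using False assms(1) by (simp add: euler_factor_def)
  qed
qed

lemma ef2:
  assumes "\<sigma> \<ge> 1"
  shows "euler_factor m \<sigma> 2 \<ge> 0" "even m \<Longrightarrow> euler_factor m \<sigma> 2 \<ge> 1"
    "odd m \<Longrightarrow> euler_factor m \<sigma> 2 = 1 - 1 / 2 powr (2*\<sigma> - 2)"
    "\<sigma> > 1 \<Longrightarrow> euler_factor m \<sigma> 2 > 0"
proof -
  have P1: "(2::real) powr (2*\<sigma> - 2) \<ge> 1" using assms by (simp add: ge_one_powr_ge_zero)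
  show "odd m \<Longrightarrow> euler_factor m \<sigma> 2 = 1 - 1 / 2 powr (2*\<sigma> - 2)"
    by (simp add: euler_factor_def)
  show "even m \<Longrightarrow> euler_factor m \<sigma> 2 \<ge> 1" by (simp add: euler_factor_def)
  show "euler_factor m \<sigma> 2 \<ge> 0" using P1 by (simp add: euler_factor_def)
  show "\<sigma> > 1 \<Longrightarrow> euler_factor m \<sigma> 2 > 0"
  proof -
    assume s: "\<sigma> > 1"
    have "(2::real) powr 0 < 2 powr (2*\<sigma> - 2)" using s by (intro powr_less_mono) auto
    then have P: "(2::real) powr (2*\<sigma> - 2) > 1" by simp
    then have "1 / (2::real) powr (2*\<sigma> - 2) < 1" by simp
    moreover have "1 / (2::real) powr (2*\<sigma> - 2) \<ge> 0" by simp
    ultimately show ?thesis unfolding euler_factor_def by (cases "2 dvd m") (auto intro: add_pos_nonneg)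
  qed
qed



lemma ef_nonneg: "\<sigma> \<ge> 1 \<Longrightarrow> prime p \<Longrightarrow> euler_factor m \<sigma> p \<ge> 0"
proof (cases "p = 2")
  case True
  assume "\<sigma> \<ge> 1" then show ?thesis using ef2(1) True by simp
next
  case False
  assume a: "\<sigma> \<ge> 1" "prime p"
  then show ?thesis using ef_ge(1)[OF a(2) False a(1), where m=m] ef_ge(2)[OF a(2) False a(1)] by linarith
qed

lemma prod_half: "(\<Prod>p\<in>PA N - {2}. 1 - 1 / (real p - 1)^2) \<ge> 1/2"
proof -
  let ?A = "PA N - {2}"
  let ?h = "\<lambda>p. p - 1"
  let ?f = "\<lambda>k. 1 - 1 / (real k)^2"
  have inj: "inj_on ?h ?A"
  proof (rule inj_onI)
    fix a b assume "a \<in> ?A" "b \<in> ?A" "a - 1 = b - 1"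
    then have "a \<ge> 2" "b \<ge> 2" "a - 1 = b - 1" by (auto simp: PA_def prime_ge_2_nat)
    then show "a = b" by arith
  qed
  have "(\<Prod>p\<in>?A. 1 - 1 / (real p - 1)^2) = (\<Prod>p\<in>?A. ?f (p - 1))"
  proof (rule prod.cong[OF refl])
    fix p assume "p \<in> ?A"
    then have "p \<ge> 1" by (auto simp: PA_def dest: prime_gt_0_nat)
    then show "1 - 1 / (real p - 1)^2 = ?f (p - 1)" by (simp add: of_nat_diff)
  qed
  also have "... = (\<Prod>k\<in>?h ` ?A. ?f k)"
    using prod.reindex[OF inj, of ?f] by (simp add: o_def)
  finally have E: "(\<Prod>p\<in>?A. 1 - 1 / (real p - 1)^2) = (\<Prod>k\<in>?h ` ?A. ?f k)" .
  have sub: "?h ` ?A \<subseteq> {2..N}"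
  proof
    fix k assume "k \<in> ?h ` ?A"
    then obtain p where "p \<in> ?A" "k = p - 1" by blast
    then have "p \<ge> 2" "p \<noteq> 2" "p \<le> N" "k = p - 1" by (auto simp: PA_def prime_ge_2_nat)
    then show "k \<in> {2..N}" by auto
  qed
  have f01: "0 \<le> ?f k \<and> ?f k \<le> 1" if "k \<in> {2..N}" for k
  proof -
    have "real k \<ge> 2" using that by simp
    then have "1^2 \<le> (real k)^2" by (intro power_mono) auto
    then have "(real k)^2 \<ge> 1" by simp
    then show ?thesis by (simp add: divide_le_eq)
  qed
  have "(\<Prod>k\<in>{2..N}. ?f k) = (\<Prod>k\<in>{2..N} - ?h ` ?A. ?f k) * (\<Prod>k\<in>?h ` ?A. ?f k)"
    by (rule prod.subset_diff[OF sub]) simp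
  also have "... \<le> (\<Prod>k\<in>?h ` ?A. ?f k)"
  proof (rule mult_left_le_one_le)
    show "0 \<le> (\<Prod>k\<in>?h ` ?A. ?f k)" using sub f01 by (intro prod_nonneg) blast
    show "0 \<le> (\<Prod>k\<in>{2..N} - ?h ` ?A. ?f k)" using f01 by (intro prod_nonneg) blast
    show "(\<Prod>k\<in>{2..N} - ?h ` ?A. ?f k) \<le> 1" using f01 by (intro prod_le_1) blast
  qed
  finally show ?thesis using E prod_inv_sq_half[of N] by linarith
qed

lemma prod_lower:
  assumes "\<sigma> \<ge> 1"
  shows "(\<Prod>p\<in>PA N. euler_factor m \<sigma> p) \<ge> min 1 (euler_factor m \<sigma> 2) / 2"
proof -
  let ?A = "PA N - {2}"
  let ?e = "euler_factor m \<sigma>"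
  have split: "(\<Prod>p\<in>PA N. ?e p) = (\<Prod>p\<in>?A. ?e p) * (\<Prod>p\<in>PA N \<inter> {2}. ?e p)"
  proof -
    have "(\<Prod>p\<in>PA N. ?e p) = (\<Prod>p\<in>PA N - PA N \<inter> {2}. ?e p) * (\<Prod>p\<in>PA N \<inter> {2}. ?e p)"
      by (rule prod.subset_diff) auto
    moreover have "PA N - PA N \<inter> {2} = ?A" by blast
    ultimately show ?thesis by simp
  qed
  have first: "(\<Prod>p\<in>PA N \<inter> {2}. ?e p) \<ge> min 1 (?e 2)"
  proof (cases "2 \<in> PA N")
    case True then have "PA N \<inter> {2} = {2}" by blast
    then show ?thesis by simp
  next
    case False then have "PA N \<inter> {2} = {}" by blast
    then show ?thesis by simp
  qed
  have "(\<Prod>p\<in>?A. ?e p) \<ge> (\<Prod>p\<in>?A. 1 - 1 / (real p - 1)^2)"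
  proof (rule prod_mono)
    fix p assume "p \<in> ?A"
    then have "prime p" "p \<noteq> 2" by (auto simp: PA_def)
    then show "0 \<le> 1 - 1 / (real p - 1)^2 \<and> 1 - 1 / (real p - 1)^2 \<le> ?e p"
      using ef_ge(1)[of p \<sigma> m] ef_ge(2)[of p \<sigma>] assms by blast
  qed
  then have second: "(\<Prod>p\<in>?A. ?e p) \<ge> 1/2" using prod_half[of N] by linarith
  have m0: "min 1 (?e 2) \<ge> 0" using ef2(1)[OF assms, of m] by simp
  have "min 1 (?e 2) / 2 = (1/2) * min 1 (?e 2)" by simp
  also have "... \<le> (\<Prod>p\<in>?A. ?e p) * (\<Prod>p\<in>PA N \<inter> {2}. ?e p)"
    using second first m0 by (intro mult_mono) auto
  finally show ?thesis using split by simp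
qed

lemma prod_upper:
  assumes "\<sigma> \<ge> 1" "N \<ge> 2" "m > 0"
  shows "(\<Prod>p\<in>PA N. euler_factor m \<sigma> p) \<le> euler_factor m \<sigma> 2 * 2 ^ card (prime_factors m)"
proof -
  let ?A = "PA N - {2}"
  let ?e = "euler_factor m \<sigma>"
  have "2 \<in> PA N" using assms(2) by (simp add: PA_def)
  then have split: "(\<Prod>p\<in>PA N. ?e p) = ?e 2 * (\<Prod>p\<in>?A. ?e p)" by (simp add: prod.remove)
  have "(\<Prod>p\<in>?A. ?e p) \<le> (\<Prod>p\<in>?A. if p dvd m then 2 else 1)"
  proof (rule prod_mono)
    fix p assume "p \<in> ?A"
    then have "prime p" "p \<noteq> 2" by (auto simp: PA_def)
    then show "0 \<le> ?e p \<and> ?e p \<le> (if p dvd m then 2 else 1)"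
      using ef_le[of p \<sigma> m] ef_nonneg[of \<sigma> p m] assms(1) by blast
  qed
  also have "(\<Prod>p\<in>?A. if p dvd m then 2 else 1) = (\<Prod>p\<in>{p\<in>?A. p dvd m}. (2::real))"
    by (rule prod.inter_filter[symmetric]) simp
  also have "... = 2 ^ card {p\<in>?A. p dvd m}" by simp
  also have "... \<le> 2 ^ card (prime_factors m)"
  proof (rule power_increasing)
    show "card {p\<in>?A. p dvd m} \<le> card (prime_factors m)"
      by (rule card_mono) (use assms(3) in \<open>auto simp: PA_def in_prime_factors_iff\<close>)
  qed simp
  finally have "(\<Prod>p\<in>?A. ?e p) \<le> 2 ^ card (prime_factors m)" .
  then show ?thesis using split ef2(1)[OF assms(1), of m] by (simp add: mult_left_mono)
qed



definition SS :: "nat \<Rightarrow> real \<Rightarrow> real" where "SS m \<sigma> = (\<Sum>q. gsp m \<sigma> (Suc q))"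

lemma SS_lower:
  assumes "\<sigma> \<ge> 1" "m > 0"
  shows "SS m \<sigma> \<ge> min 1 (euler_factor m \<sigma> 2) / 2"
  unfolding SS_def
  by (rule LIMSEQ_le_const[OF spec_lim[OF assms]]) (use prod_lower[OF assms(1)] in blast)

lemma SS_upper:
  assumes "\<sigma> \<ge> 1" "m > 0"
  shows "SS m \<sigma> \<le> euler_factor m \<sigma> 2 * 2 ^ card (prime_factors m)"
  unfolding SS_def
  by (rule LIMSEQ_le_const2[OF spec_lim[OF assms]]) (use prod_upper[OF assms(1) _ assms(2)] in blast)

lemma part2:
  assumes "Re s > 1" "m > 0"
  shows "(\<lambda>p. complex_of_real (euler_factor m (Re s) p)) has_prod spectrum m s"
proof -
  define \<sigma> where "\<sigma> = Re s"
  have s1: "\<sigma> \<ge> 1" using assms by (simp add: \<sigma>_def)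
  have sp: "spectrum m s = of_real (SS m \<sigma>)" using spec_eq[of s m] assms by (simp add: SS_def \<sigma>_def)
  have pos: "SS m \<sigma> > 0"
  proof -
    have "euler_factor m \<sigma> 2 > 0" using ef2(4)[OF s1] assms by (simp add: \<sigma>_def)
    then have "min 1 (euler_factor m \<sigma> 2) / 2 > 0" by simp
    then show ?thesis using SS_lower[OF s1 assms(2)] by linarith
  qed
  have eq: "(\<Prod>i\<le>n. euler_factor m \<sigma> i) = (\<Prod>p\<in>PA n. euler_factor m \<sigma> p)" for n
  proof (rule prod.mono_neutral_right)
    show "PA n \<subseteq> {..n}" by (auto simp: PA_def)
    show "\<forall>i\<in>{..n} - PA n. euler_factor m \<sigma> i = 1" by (auto simp: PA_def euler_factor_def)
  qed simp
  have lim: "(\<lambda>n. \<Prod>i\<le>n. euler_factor m \<sigma> i) \<longlonglongrightarrow> SS m \<sigma>"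
    unfolding eq SS_def by (rule spec_lim[OF s1 assms(2)])
  have "raw_has_prod (\<lambda>p. complex_of_real (euler_factor m \<sigma> p)) 0 (of_real (SS m \<sigma>))"
    unfolding raw_has_prod_def
  proof
    show "(\<lambda>n. \<Prod>i\<le>n. complex_of_real (euler_factor m \<sigma> (i + 0))) \<longlonglongrightarrow> complex_of_real (SS m \<sigma>)"
      using tendsto_of_real[OF lim, where 'a=complex] by (simp add: of_real_prod)
    show "complex_of_real (SS m \<sigma>) \<noteq> 0" using pos by simp
  qed
  then show ?thesis unfolding has_prod_def sp \<sigma>_def by blast
qed

lemma part4:
  assumes "m \<ge> 2" "even m" "\<sigma> \<ge> 1"
  shows "spectrum m (complex_of_real \<sigma>) \<in> \<real> \<and> Re (spectrum m (complex_of_real \<sigma>)) \<ge> 1 / 2"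
proof -
  have m0: "m > 0" using assms by simp
  have sp: "spectrum m (complex_of_real \<sigma>) = of_real (SS m \<sigma>)"
    using spec_eq[of "complex_of_real \<sigma>" m] assms m0 by (simp add: SS_def)
  have "euler_factor m \<sigma> 2 \<ge> 1" using ef2(2)[OF assms(3)] assms(2) by simp
  then have "SS m \<sigma> \<ge> 1/2" using SS_lower[OF assms(3) m0] by simp
  then show ?thesis using sp by simp
qed

lemma part3:
  assumes "odd m"
  shows "((\<lambda>\<sigma>::real. spectrum m (complex_of_real \<sigma>)) \<longlongrightarrow> 0) (at_right 1)"
proof -
  have m0: "m > 0" using assms by (cases m) auto
  define c where "c = (2::real) ^ card (prime_factors m)"
  have ev: "eventually (\<lambda>\<sigma>. \<sigma> > (1::real)) (at_right 1)"
    by (simp add: eventually_at_filter)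
  have bound: "norm (spectrum m (complex_of_real \<sigma>)) \<le> (1 - 1 / 2 powr (2*\<sigma> - 2)) * c"
    if "\<sigma> > 1" for \<sigma>
  proof -
    have s1: "\<sigma> \<ge> 1" using that by simp
    have sp: "spectrum m (complex_of_real \<sigma>) = of_real (SS m \<sigma>)"
      using spec_eq[of "complex_of_real \<sigma>" m] s1 m0 by (simp add: SS_def)
    have "min 1 (euler_factor m \<sigma> 2) \<ge> 0" using ef2(1)[OF s1, of m] by simp
    then have lo: "SS m \<sigma> \<ge> 0" using SS_lower[OF s1 m0] by linarith
    have up: "SS m \<sigma> \<le> (1 - 1 / 2 powr (2*\<sigma> - 2)) * c"
      using SS_upper[OF s1 m0] ef2(3)[OF s1 assms] by (simp add: c_def)
    show ?thesis using sp lo up by simp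
  qed
  have "((\<lambda>\<sigma>. spectrum m (complex_of_real \<sigma>)) \<longlongrightarrow> 0) (at_right 1)"
  proof (rule Lim_null_comparison)
    show "\<forall>\<^sub>F \<sigma> in at_right 1. norm (spectrum m (complex_of_real \<sigma>)) \<le> (1 - 1 / 2 powr (2*\<sigma> - 2)) * c"
      using ev by (rule eventually_mono) (rule bound)
    have "((\<lambda>\<sigma>::real. (1 - 1 / 2 powr (2*\<sigma> - 2)) * c) \<longlongrightarrow> (1 - 1 / 2 powr (2*1 - 2)) * c) (at_right 1)"
      by (intro tendsto_intros) auto
    then show "((\<lambda>\<sigma>::real. (1 - 1 / 2 powr (2*\<sigma> - 2)) * c) \<longlongrightarrow> 0) (at_right 1)" by simp
  qed
  then show ?thesis .
qed



lemma floor_ratio: "((\<lambda>x::real. real (nat \<lfloor>x\<rfloor>) / x) \<longlongrightarrow> 1) at_top"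
proof (rule tendsto_sandwich[of "\<lambda>x. (x - 1) / x" _ _ "\<lambda>x. 1"])
  show "\<forall>\<^sub>F x in at_top. (x - 1) / x \<le> real (nat \<lfloor>x\<rfloor>) / x"
  proof (rule eventually_mono[OF eventually_ge_at_top[of 1]])
    fix x :: real assume x: "x \<ge> 1"
    have "real (nat \<lfloor>x\<rfloor>) \<ge> x - 1" using x by linarith
    then show "(x - 1) / x \<le> real (nat \<lfloor>x\<rfloor>) / x" using x by (simp add: divide_right_mono)
  qed
  show "\<forall>\<^sub>F x in at_top. real (nat \<lfloor>x\<rfloor>) / x \<le> 1"
  proof (rule eventually_mono[OF eventually_ge_at_top[of 1]])
    fix x :: real assume x: "x \<ge> 1"
    have "real (nat \<lfloor>x\<rfloor>) \<le> x" using x by linarith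
    then show "real (nat \<lfloor>x\<rfloor>) / x \<le> 1" using x by simp
  qed
  show "((\<lambda>x::real. (x - 1) / x) \<longlongrightarrow> 1) at_top" by real_asymp
qed simp

lemma geo_mean:
  fixes z :: complex
  assumes "norm z = 1"
  shows "((\<lambda>x::real. (1 / of_real x) * (\<Sum>n\<in>{1..nat \<lfloor>x\<rfloor>}. z ^ n)) \<longlongrightarrow> (if z = 1 then 1 else 0)) at_top"
proof (cases "z = 1")
  case True
  have "((\<lambda>x::real. complex_of_real (real (nat \<lfloor>x\<rfloor>) / x)) \<longlongrightarrow> complex_of_real 1) at_top"
    by (rule tendsto_of_real[OF floor_ratio])
  moreover have "(1 / of_real x) * (\<Sum>n\<in>{1..nat \<lfloor>x\<rfloor>}. z ^ n) = complex_of_real (real (nat \<lfloor>x\<rfloor>) / x)" for x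
    using True by (simp add: divide_inverse mult.commute)
  ultimately show ?thesis using True by simp
next
  case False
  define B where "B = 2 / norm (z - 1)"
  have bnd: "norm (\<Sum>n\<in>{1..N}. z ^ n) \<le> B" for N
  proof -
    have "(\<Sum>n\<in>{1..N}. z ^ n) = z * (\<Sum>n<N. z ^ n)"
      using sum.atLeast1_atMost_eq[of "\<lambda>n. z ^ n" N] by (simp add: sum_distrib_left atLeastAtMost_def)
    also have "... = z * ((z ^ N - 1) / (z - 1))" using geometric_sum[OF False] by simp
    finally have e: "(\<Sum>n\<in>{1..N}. z ^ n) = z * ((z ^ N - 1) / (z - 1))" .
    have "norm (z ^ N - 1) \<le> norm (z ^ N) + norm (1::complex)" by (rule norm_triangle_ineq4)
    then have "norm (z ^ N - 1) \<le> 2" using assms by (simp add: norm_power)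
    then show ?thesis unfolding e B_def using assms False
      by (simp add: norm_mult norm_divide divide_right_mono)
  qed
  have "((\<lambda>x::real. (1 / of_real x) * (\<Sum>n\<in>{1..nat \<lfloor>x\<rfloor>}. z ^ n)) \<longlongrightarrow> 0) at_top"
  proof (rule Lim_null_comparison)
    show "\<forall>\<^sub>F x in at_top. norm ((1 / of_real x) * (\<Sum>n\<in>{1..nat \<lfloor>x\<rfloor>}. z ^ n)) \<le> B / x"
    proof (rule eventually_mono[OF eventually_gt_at_top[of 0]])
      fix x :: real assume x: "x > 0"
      have "norm ((1 / of_real x) * (\<Sum>n\<in>{1..nat \<lfloor>x\<rfloor>}. z ^ n)) = norm (\<Sum>n\<in>{1..nat \<lfloor>x\<rfloor>}. z ^ n) / x"
        using x by (simp add: norm_mult norm_divide)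
      also have "... \<le> B / x" using bnd x by (simp add: divide_right_mono)
      finally show "norm ((1 / of_real x) * (\<Sum>n\<in>{1..nat \<lfloor>x\<rfloor>}. z ^ n)) \<le> B / x" .
    qed
    show "((\<lambda>x. B / x) \<longlongrightarrow> 0) at_top" by real_asymp
  qed
  then show ?thesis using False by simp
qed

lemma ratio_int_iff:
  assumes "d > 0"
  shows "real a / real d \<in> \<int> \<longleftrightarrow> d dvd (a::nat)"
proof
  assume "real a / real d \<in> \<int>"
  then obtain j where j: "real a / real d = of_int j" by (auto elim: Ints_cases)
  then have "real a = real d * of_int j" using assms by (simp add: field_simps)
  then have "int a = int d * j" by (metis of_int_eq_iff of_int_mult of_int_of_nat_eq)
  then have "int d dvd int a" by simp
  then show "d dvd a" by simp
next
  assume "d dvd a"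
  then obtain t where "a = d * t" by blast
  then show "real a / real d \<in> \<int>" using assms by simp
qed

definition sg :: "nat \<Rightarrow> nat \<Rightarrow> nat" where "sg q k = (q - k) mod q"

lemma sg_props:
  assumes "q > 0" "k \<in> RR q"
  shows "sg q k \<in> RR q" "sg q (sg q k) = k"
    "\<And>l. l < q \<Longrightarrow> q dvd k + l \<longleftrightarrow> l = sg q k"
proof -
  have k: "k < q" "coprime k q" using assms by (auto simp: RR_def)
  have c: "coprime (q - k) q"
    using k by (smt (verit, best) coprime_imp_coprime dvd_diffD1 dvd_diff_nat less_imp_le)
  show "sg q k \<in> RR q" unfolding sg_def RR_def using c assms by simp
  show "sg q (sg q k) = k"
  proof (cases "k = 0")
    case True then show ?thesis by (simp add: sg_def)
  next
    case False
    then have "sg q k = q - k" using k by (simp add: sg_def)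
    then show ?thesis using k False by (simp add: sg_def)
  qed
  fix l assume l: "l < q"
  show "q dvd k + l \<longleftrightarrow> l = sg q k"
  proof (cases "k = 0")
    case True
    then show ?thesis using l by (auto simp: sg_def dest: dvd_imp_le)
  next
    case False
    have "sgk": "sg q k = q - k" using k False by (simp add: sg_def)
    show ?thesis
    proof
      assume "q dvd k + l"
      then obtain t where t: "k + l = q * t" by blast
      have "t > 0" using t False by (cases t) auto
      moreover have "t < 2" using t k l by (cases t; cases "t - 1") auto
      ultimately have "t = 1" by simp
      then show "l = sg q k" using t sgk by simp
    next
      assume "l = sg q k"
      then have "k + l = q" using sgk k by simp
      then show "q dvd k + l" by simp
    qed
  qed
qed



lemma prod_expand:
  assumes "q > 0" "r > 0"
  shows "ramanujan_sum q n * ramanujan_sum r (n+m) =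
    (\<Sum>k\<in>RR q. \<Sum>l\<in>RR r. ee (real l * real m / real r) * ee (real k / real q + real l / real r) ^ n)"
proof -
  have "ramanujan_sum q n * ramanujan_sum r (n+m) =
     (\<Sum>k\<in>RR q. \<Sum>l\<in>RR r. ee (real k * real n / real q) * ee (real l * real (n+m) / real r))"
    using assms by (simp add: rs_RR sum_product)
  also have "... = (\<Sum>k\<in>RR q. \<Sum>l\<in>RR r. ee (real l * real m / real r) * ee (real k / real q + real l / real r) ^ n)"
  proof (intro sum.cong refl)
    fix k l
    have "real k * real n / real q + real l * real (n+m) / real r
        = real l * real m / real r + real n * (real k / real q + real l / real r)"
      using assms by (simp add: field_simps)
    then show "ee (real k * real n / real q) * ee (real l * real (n+m) / real r) =
        ee (real l * real m / real r) * ee (real k / real q + real l / real r) ^ n"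
      by (metis ee_add ee_nat_mult)
  qed
  finally show ?thesis .
qed

lemma zl_iff:
  assumes "q > 0" "r > 0" "k \<in> RR q" "l \<in> RR r"
  shows "ee (real k / real q + real l / real r) = 1 \<longleftrightarrow> (q = r \<and> q dvd k + l)"
proof -
  have ck: "coprime k q" and cl: "coprime l r" using assms by (auto simp: RR_def)
  have "real k / real q + real l / real r = real (k*r + l*q) / real (q*r)"
    using assms by (simp add: field_simps)
  then have "ee (real k / real q + real l / real r) = 1 \<longleftrightarrow> q*r dvd k*r + l*q"
    using ratio_int_iff[of "q*r" "k*r + l*q"] assms by (simp add: ee_eq_1_iff)
  also have "... \<longleftrightarrow> (q = r \<and> q dvd k + l)"
  proof
    assume h: "q*r dvd k*r + l*q"
    then have "q dvd k*r + l*q" using dvd_mult_left by blast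
    then have "q dvd k*r" by (simp add: dvd_add_left_iff)
    then have qr: "q dvd r" using ck by (simp add: coprime_dvd_mult_right_iff coprime_commute)
    have "r dvd k*r + l*q" using h dvd_mult_right by blast
    then have "r dvd l*q" by (simp add: dvd_add_right_iff)
    then have rq: "r dvd q" using cl by (simp add: coprime_dvd_mult_right_iff coprime_commute)
    have "q = r" using qr rq by (rule dvd_antisym)
    moreover have "q*q dvd q*(k+l)" using h \<open>q = r\<close> by (simp add: algebra_simps)
    then have "q dvd k + l" using assms by simp
    ultimately show "q = r \<and> q dvd k + l" by simp
  next
    assume h: "q = r \<and> q dvd k + l"
    then have "q*r dvd (k+l)*r" by (intro mult_dvd_mono) auto
    then show "q*r dvd k*r + l*q" using h by (simp add: add_mult_distrib)
  qed
  finally show ?thesis .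
qed

lemma orth_value_same:
  assumes "q > 0"
  shows "(\<Sum>k\<in>RR q. \<Sum>l\<in>RR q. ee (real l * real m / real q) *
           (if ee (real k / real q + real l / real q) = 1 then 1 else 0))
       = ramanujan_sum q m"
proof -
  define E where "E l = ee (real l * real m / real q)" for l
  have "(\<Sum>k\<in>RR q. \<Sum>l\<in>RR q. ee (real l * real m / real q) *
           (if ee (real k / real q + real l / real q) = 1 then 1 else 0))
      = (\<Sum>k\<in>RR q. \<Sum>l\<in>RR q. if l = sg q k then E l else 0)"
  proof (intro sum.cong refl)
    fix k l assume k: "k \<in> RR q" and l: "l \<in> RR q"
    have "l < q" using l by (simp add: RR_def)
    then show "ee (real l * real m / real q) * (if ee (real k / real q + real l / real q) = 1 then 1 else 0)
        = (if l = sg q k then E l else 0)"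
      using zl_iff[OF assms assms k l] sg_props(3)[OF assms k \<open>l < q\<close>] by (simp add: E_def)
  qed
  also have "... = (\<Sum>k\<in>RR q. E (sg q k))"
  proof (rule sum.cong[OF refl])
    fix k assume "k \<in> RR q"
    then have "sg q k \<in> RR q" using sg_props(1) assms by blast
    then show "(\<Sum>l\<in>RR q. if l = sg q k then E l else 0) = E (sg q k)"
      by (simp add: sum.delta')
  qed
  also have "... = (\<Sum>l\<in>RR q. E l)"
    by (rule sum.reindex_bij_witness[where i="sg q" and j="sg q"]) (use sg_props assms in auto)
  also have "... = ramanujan_sum q m" using assms by (simp add: rs_RR E_def)
  finally show ?thesis .
qed

lemma orth_value:
  assumes "q > 0" "r > 0"
  shows "(\<Sum>k\<in>RR q. \<Sum>l\<in>RR r. ee (real l * real m / real r) *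
           (if ee (real k / real q + real l / real r) = 1 then 1 else 0))
       = (if q = r then ramanujan_sum q m else 0)"
proof (cases "q = r")
  case False
  then show ?thesis using zl_iff[OF assms] by (simp add: sum.neutral)
next
  case True
  then show ?thesis using orth_value_same[OF assms(1), of m] by simp
qed

lemma orth:
  assumes "q > 0" "r > 0"
  shows "((\<lambda>x::real. (1 / of_real x) * (\<Sum>n\<in>{1..nat \<lfloor>x\<rfloor>}. ramanujan_sum q n * ramanujan_sum r (n+m)))
          \<longlongrightarrow> (if q = r then ramanujan_sum q m else 0)) at_top"
proof -
  define z where "z k l = ee (real k / real q + real l / real r)" for k l
  define E where "E l = ee (real l * real m / real r)" for l
  have eq: "(1 / of_real x) * (\<Sum>n\<in>{1..nat \<lfloor>x\<rfloor>}. ramanujan_sum q n * ramanujan_sum r (n+m))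
      = (\<Sum>k\<in>RR q. \<Sum>l\<in>RR r. E l * ((1 / of_real x) * (\<Sum>n\<in>{1..nat \<lfloor>x\<rfloor>}. z k l ^ n)))" for x
  proof -
    have "(\<Sum>n\<in>{1..nat \<lfloor>x\<rfloor>}. ramanujan_sum q n * ramanujan_sum r (n+m))
        = (\<Sum>n\<in>{1..nat \<lfloor>x\<rfloor>}. \<Sum>k\<in>RR q. \<Sum>l\<in>RR r. E l * z k l ^ n)"
      using prod_expand[OF assms] by (simp add: E_def z_def)
    also have "... = (\<Sum>k\<in>RR q. \<Sum>n\<in>{1..nat \<lfloor>x\<rfloor>}. \<Sum>l\<in>RR r. E l * z k l ^ n)"
      by (rule sum.swap)
    also have "... = (\<Sum>k\<in>RR q. \<Sum>l\<in>RR r. \<Sum>n\<in>{1..nat \<lfloor>x\<rfloor>}. E l * z k l ^ n)"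
      by (rule sum.cong[OF refl], rule sum.swap)
    also have "... = (\<Sum>k\<in>RR q. \<Sum>l\<in>RR r. E l * (\<Sum>n\<in>{1..nat \<lfloor>x\<rfloor>}. z k l ^ n))"
      by (simp add: sum_distrib_left)
    finally show ?thesis by (simp add: sum_distrib_left mult.left_commute)
  qed
  have lim: "((\<lambda>x::real. \<Sum>k\<in>RR q. \<Sum>l\<in>RR r. E l * ((1 / of_real x) * (\<Sum>n\<in>{1..nat \<lfloor>x\<rfloor>}. z k l ^ n)))
      \<longlongrightarrow> (\<Sum>k\<in>RR q. \<Sum>l\<in>RR r. E l * (if z k l = 1 then 1 else 0))) at_top"
    by (intro tendsto_sum tendsto_mult tendsto_const geo_mean) (simp add: z_def norm_ee)
  have "(\<Sum>k\<in>RR q. \<Sum>l\<in>RR r. E l * (if z k l = 1 then 1 else 0)) = (if q = r then ramanujan_sum q m else 0)"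
    unfolding E_def z_def by (rule orth_value[OF assms])
  then show ?thesis using lim unfolding eq by simp
qed



definition wt :: "real \<Rightarrow> nat \<Rightarrow> real" where
  "wt \<tau> n = (\<Prod>p\<in>prime_factors n. 1 + real p * al \<tau> p)"

definition Zt :: "real \<Rightarrow> real" where "Zt \<tau> = (\<Sum>n. real n powr (-\<tau>))"

lemma pz_bound:
  assumes "\<tau> > 1"
  shows "(\<Sum>p\<in>PA N. real p powr (-\<tau>)) \<le> Zt \<tau>"
  unfolding Zt_def
proof (rule sum_le_suminf)
  show "summable (\<lambda>n. real n powr (-\<tau>))" using assms by (simp add: summable_real_powr_iff)
qed auto

lemma al_le:
  assumes "\<tau> \<ge> 1" "prime p"
  shows "al \<tau> p \<le> 2 * real p powr (-\<tau>)" "real p * al \<tau> p \<le> 2" "al \<tau> p \<ge> 0"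
proof -
  have p2: "real p \<ge> 2" using prime_ge_2_nat[OF assms(2)] by simp
  define P where "P = real p powr (\<tau> - 1)"
  have P1: "P \<ge> 1" using p2 assms(1) by (simp add: P_def ge_one_powr_ge_zero)
  have a: "al \<tau> p = 1 / (P * (real p - 1))" using al_prime[OF assms(2)] by (simp add: P_def)
  have "real p powr (-\<tau>) = 1 / (P * real p)"
  proof -
    have "real p powr \<tau> = P * real p" unfolding P_def using p2 by (simp add: powr_diff)
    then show ?thesis by (simp add: powr_minus divide_inverse)
  qed
  then have b: "2 * real p powr (-\<tau>) = 2 / (P * real p)" by simp
  show "al \<tau> p \<le> 2 * real p powr (-\<tau>)"
    unfolding a b using P1 p2 by (simp add: divide_simps)
  show "real p * al \<tau> p \<le> 2"
  proof -
    have "P * (real p - 1) \<ge> real p - 1" using P1 p2 mult_right_mono[of 1 P "real p - 1"] by simp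
    then have "real p \<le> 2 * (P * (real p - 1))" using p2 by linarith
    then show ?thesis unfolding a using P1 p2 by (simp add: divide_simps)
  qed
  show "al \<tau> p \<ge> 0" by (rule al_nonneg)
qed

lemma al_sum_bound:
  assumes "\<tau> > 1"
  shows "(\<Sum>p\<in>PA N. al \<tau> p) \<le> 2 * Zt \<tau>"
proof -
  have "(\<Sum>p\<in>PA N. al \<tau> p) \<le> (\<Sum>p\<in>PA N. 2 * real p powr (-\<tau>))"
    by (rule sum_mono) (use al_le(1) assms in \<open>auto simp: PA_def\<close>)
  also have "... = 2 * (\<Sum>p\<in>PA N. real p powr (-\<tau>))" by (simp add: sum_distrib_left)
  also have "... \<le> 2 * Zt \<tau>" using pz_bound[OF assms] by simp
  finally show ?thesis .
qed

lemma al_mult_sqf: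
  assumes "finite B" "\<forall>p\<in>B. prime p"
  shows "al \<tau> (\<Prod>B) = (\<Prod>p\<in>B. al \<tau> p)"
  using al_sqf[OF assms] assms(2) by (simp add: al_prime)

lemma wt_ge1: "wt \<tau> n \<ge> 1"
  unfolding wt_def by (rule prod_ge_1) (simp add: al_nonneg)

lemma majorant:
  assumes "\<tau> > 1" "n > 0"
  shows "(\<Sum>q\<in>{1..N}. al \<tau> q * kap n q) \<le> exp (2 * Zt \<tau>) * wt \<tau> n"
proof -
  define x where "x p = al \<tau> p * (if p dvd n then real p else 1)" for p
  have "(\<Sum>q\<in>{1..N}. \<bar>al \<tau> q * kap n q\<bar>) \<le> (\<Prod>p\<in>PA N. 1 + x p)"
  proof (rule euler_bound)
    fix p :: nat assume "prime p" then show "0 \<le> x p" by (simp add: x_def al_nonneg)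
  next
    fix B :: "nat set" assume B: "finite B" "\<forall>p\<in>B. prime p"
    have "al \<tau> (\<Prod>B) * kap n (\<Prod>B) = (\<Prod>p\<in>B. x p)"
      using al_mult_sqf[OF B] kap_sqf[OF B] by (simp add: x_def prod.distrib)
    moreover have "kap n (\<Prod>B) \<ge> 1" by (rule kap_ge1)
    then have "al \<tau> (\<Prod>B) * kap n (\<Prod>B) \<ge> 0" using al_nonneg[of \<tau> "\<Prod>B"] by simp
    ultimately show "\<bar>al \<tau> (\<Prod>B) * kap n (\<Prod>B)\<bar> \<le> (\<Prod>p\<in>B. x p)" by simp
  next
    fix q :: nat assume "q > 0" "\<not> squarefree q"
    then show "al \<tau> q * kap n q = 0" by (simp add: al_nonsqf)
  qed
  also have "... \<le> (\<Prod>p\<in>PA N. (1 + al \<tau> p) * (if p dvd n then 1 + real p * al \<tau> p else 1))"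
  proof (rule prod_mono)
    fix p assume "p \<in> PA N"
    have a0: "al \<tau> p \<ge> 0" by (rule al_nonneg)
    show "0 \<le> 1 + x p \<and> 1 + x p \<le> (1 + al \<tau> p) * (if p dvd n then 1 + real p * al \<tau> p else 1)"
      using a0 by (auto simp: x_def algebra_simps)
  qed
  also have "... = (\<Prod>p\<in>PA N. 1 + al \<tau> p) * (\<Prod>p\<in>PA N. if p dvd n then 1 + real p * al \<tau> p else 1)"
    by (rule prod.distrib)
  also have "... \<le> exp (2 * Zt \<tau>) * wt \<tau> n"
  proof (rule mult_mono)
    have "(\<Prod>p\<in>PA N. 1 + al \<tau> p) \<le> exp (\<Sum>p\<in>PA N. al \<tau> p)"
      by (rule prod_le_exp_sum) (simp add: al_nonneg)
    also have "... \<le> exp (2 * Zt \<tau>)" using al_sum_bound[OF assms(1)] by simp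
    finally show "(\<Prod>p\<in>PA N. 1 + al \<tau> p) \<le> exp (2 * Zt \<tau>)" .
    have "(\<Prod>p\<in>PA N. if p dvd n then 1 + real p * al \<tau> p else 1) = (\<Prod>p\<in>{p\<in>PA N. p dvd n}. 1 + real p * al \<tau> p)"
      by (rule prod.inter_filter[symmetric]) simp
    also have "... \<le> wt \<tau> n" unfolding wt_def
    proof (rule prod_mono2)
      show "{p \<in> PA N. p dvd n} \<subseteq> prime_factors n" using assms(2) by (auto simp: PA_def in_prime_factors_iff)
    qed (auto simp: al_nonneg)
    finally show "(\<Prod>p\<in>PA N. if p dvd n then 1 + real p * al \<tau> p else 1) \<le> wt \<tau> n" .
    show "0 \<le> exp (2 * Zt \<tau>)" by simp
    show "0 \<le> (\<Prod>p\<in>PA N. if p dvd n then 1 + real p * al \<tau> p else 1)"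
      by (rule prod_nonneg) (simp add: al_nonneg)
  qed
  finally have fin: "(\<Sum>q\<in>{1..N}. \<bar>al \<tau> q * kap n q\<bar>) \<le> exp (2 * Zt \<tau>) * wt \<tau> n" .
  have nn: "al \<tau> q * kap n q \<ge> 0" for q
    by (metis al_nonneg kap_ge1 mult_nonneg_nonneg order_trans zero_le_one)
  have "(\<Sum>q\<in>{1..N}. \<bar>al \<tau> q * kap n q\<bar>) = (\<Sum>q\<in>{1..N}. al \<tau> q * kap n q)"
    by (rule sum.cong[OF refl]) (simp add: nn)
  then show ?thesis using fin by simp
qed



lemma card_dvd_le:
  assumes "d > 0"
  shows "real (card {n\<in>{1..N}. d dvd n}) \<le> real N / real d"
proof -
  have sub: "{n\<in>{1..N}. d dvd n} \<subseteq> (\<lambda>k. d*k) ` {1..N div d}"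
  proof
    fix n assume "n \<in> {n\<in>{1..N}. d dvd n}"
    then obtain k where k: "n = d*k" "1 \<le> n" "n \<le> N" by auto
    then have "k \<ge> 1" by (cases k) auto
    moreover have "k \<le> N div d" using k assms by (simp add: less_eq_div_iff_mult_less_eq mult.commute)
    ultimately show "n \<in> (\<lambda>k. d*k) ` {1..N div d}" using k by auto
  qed
  have "card {n\<in>{1..N}. d dvd n} \<le> card ((\<lambda>k. d*k) ` {1..N div d})" by (rule card_mono[OF _ sub]) simp
  also have "... \<le> card {1..N div d}" by (rule card_image_le) simp
  finally have c: "card {n\<in>{1..N}. d dvd n} \<le> N div d" by simp
  have "d * (N div d) \<le> N" by (rule times_div_less_eq_dividend)
  then have "real d * real (N div d) \<le> real N" by (metis of_nat_le_iff of_nat_mult)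
  then have "real (N div d) \<le> real N / real d" using assms by (simp add: field_simps)
  then show ?thesis using c by (meson of_nat_le_iff order_trans)
qed

lemma sq_le4: "0 \<le> t \<Longrightarrow> t \<le> 2 \<Longrightarrow> (1 + t)^2 \<le> 1 + 4 * (t::real)"
proof -
  assume t: "0 \<le> t" "t \<le> 2"
  have "t * t \<le> 2 * t" using t by (intro mult_right_mono) auto
  then show ?thesis by (simp add: power2_eq_square algebra_simps)
qed

lemma L2:
  assumes "\<tau> > 1"
  shows "(\<Sum>n\<in>{1..N}. (wt \<tau> n)^2) \<le> exp (8 * Zt \<tau>) * real N"
proof -
  define \<rho> where "\<rho> p = 4 * (real p * al \<tau> p)" for p
  define R where "R B = (\<Prod>p\<in>B. \<rho> p)" for B
  have \<rho>0: "\<rho> p \<ge> 0" for p by (simp add: \<rho>_def al_nonneg)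
  have R0: "R B \<ge> 0" for B unfolding R_def by (rule prod_nonneg) (simp add: \<rho>0)
  have step1: "(wt \<tau> n)^2 \<le> (\<Sum>B\<in>Pow (PA N). if B \<subseteq> prime_factors n then R B else 0)"
    if n: "n \<in> {1..N}" for n
  proof -
    have "(wt \<tau> n)^2 = (\<Prod>p\<in>prime_factors n. (1 + real p * al \<tau> p)^2)"
      unfolding wt_def by (simp add: prod_power_distrib)
    also have "... \<le> (\<Prod>p\<in>prime_factors n. 1 + \<rho> p)"
    proof (rule prod_mono)
      fix p assume "p \<in> prime_factors n"
      then have "prime p" by auto
      then have "real p * al \<tau> p \<le> 2" "real p * al \<tau> p \<ge> 0" using al_le[of \<tau> p] assms by auto
      then show "0 \<le> (1 + real p * al \<tau> p)^2 \<and> (1 + real p * al \<tau> p)^2 \<le> 1 + \<rho> p"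
        unfolding \<rho>_def using sq_le4 by auto
    qed
    also have "... = (\<Sum>B\<in>Pow (prime_factors n). R B)"
      using prod_add[of "prime_factors n" \<rho> "\<lambda>_. 1"] by (simp add: R_def add.commute)
    also have "Pow (prime_factors n) = {B\<in>Pow (PA N). B \<subseteq> prime_factors n}"
      using pf_sub_PA[of n N] n by auto
    also have "(\<Sum>B\<in>{B\<in>Pow (PA N). B \<subseteq> prime_factors n}. R B) = (\<Sum>B\<in>Pow (PA N). if B \<subseteq> prime_factors n then R B else 0)"
      by (rule sum.inter_filter) simp
    finally show ?thesis .
  qed
  have "(\<Sum>n\<in>{1..N}. (wt \<tau> n)^2) \<le> (\<Sum>n\<in>{1..N}. \<Sum>B\<in>Pow (PA N). if B \<subseteq> prime_factors n then R B else 0)"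
    by (rule sum_mono) (rule step1)
  also have "... = (\<Sum>B\<in>Pow (PA N). \<Sum>n\<in>{1..N}. if B \<subseteq> prime_factors n then R B else 0)"
    by (rule sum.swap)
  also have "... = (\<Sum>B\<in>Pow (PA N). R B * real (card {n\<in>{1..N}. B \<subseteq> prime_factors n}))"
  proof (rule sum.cong[OF refl])
    fix B
    have "(\<Sum>n\<in>{1..N}. if B \<subseteq> prime_factors n then R B else 0) = (\<Sum>n\<in>{n\<in>{1..N}. B \<subseteq> prime_factors n}. R B)"
      by (rule sum.inter_filter[symmetric]) simp
    then show "(\<Sum>n\<in>{1..N}. if B \<subseteq> prime_factors n then R B else 0) = R B * real (card {n\<in>{1..N}. B \<subseteq> prime_factors n})"
      by simp
  qed
  also have "... \<le> (\<Sum>B\<in>Pow (PA N). R B * (real N / real (\<Prod>B)))"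
  proof (rule sum_mono)
    fix B assume "B \<in> Pow (PA N)"
    then have B: "finite B" "\<forall>p\<in>B. prime p" using PA_finite[of N] finite_subset PA_primes by blast+
    have "{n\<in>{1..N}. B \<subseteq> prime_factors n} \<subseteq> {n\<in>{1..N}. \<Prod>B dvd n}"
      using dvd_of_pf_subset[OF B] by blast
    then have "card {n\<in>{1..N}. B \<subseteq> prime_factors n} \<le> card {n\<in>{1..N}. \<Prod>B dvd n}"
      by (rule card_mono[rotated]) simp
    also have "real (card {n\<in>{1..N}. \<Prod>B dvd n}) \<le> real N / real (\<Prod>B)"
      by (rule card_dvd_le[OF prod_primes_pos[OF B(2)]])
    finally show "R B * real (card {n\<in>{1..N}. B \<subseteq> prime_factors n}) \<le> R B * (real N / real (\<Prod>B))"
      using R0 by (intro mult_left_mono) auto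
  qed
  also have "... = real N * (\<Prod>p\<in>PA N. 1 + \<rho> p / real p)"
  proof -
    have "(\<Sum>B\<in>Pow (PA N). R B * (real N / real (\<Prod>B))) = real N * (\<Sum>B\<in>Pow (PA N). \<Prod>p\<in>B. \<rho> p / real p)"
      by (simp add: sum_distrib_left R_def prod_dividef of_nat_prod mult.commute)
    also have "(\<Sum>B\<in>Pow (PA N). \<Prod>p\<in>B. \<rho> p / real p) = (\<Prod>p\<in>PA N. 1 + \<rho> p / real p)"
      using prod_add[of "PA N" "\<lambda>p. \<rho> p / real p" "\<lambda>_. 1"] by (simp add: add.commute)
    finally show ?thesis .
  qed
  also have "... \<le> real N * exp (8 * Zt \<tau>)"
  proof (rule mult_left_mono)
    have "(\<Prod>p\<in>PA N. 1 + \<rho> p / real p) \<le> exp (\<Sum>p\<in>PA N. \<rho> p / real p)"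
      by (rule prod_le_exp_sum) (simp add: \<rho>0)
    also have "(\<Sum>p\<in>PA N. \<rho> p / real p) = 4 * (\<Sum>p\<in>PA N. al \<tau> p)"
    proof -
      have "(\<Sum>p\<in>PA N. \<rho> p / real p) = (\<Sum>p\<in>PA N. 4 * al \<tau> p)"
      proof (rule sum.cong[OF refl])
        fix p assume "p \<in> PA N"
        then have "real p > 0" by (auto simp: PA_def prime_gt_0_nat)
        then show "\<rho> p / real p = 4 * al \<tau> p" by (simp add: \<rho>_def)
      qed
      then show ?thesis by (simp add: sum_distrib_left)
    qed
    also have "exp (4 * (\<Sum>p\<in>PA N. al \<tau> p)) \<le> exp (8 * Zt \<tau>)"
      using al_sum_bound[OF assms, of N] by simp
    finally show "(\<Prod>p\<in>PA N. 1 + \<rho> p / real p) \<le> exp (8 * Zt \<tau>)" .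
  qed simp
  finally show ?thesis by (simp add: mult.commute)
qed



lemma term_bound:
  assumes "q > 0"
  shows "norm (coef s q * ramanujan_sum q n) \<le> al (Re s) q * kap n q"
proof (cases "squarefree q")
  case True
  have "norm (coef s q * ramanujan_sum q n) = al (Re s) q * norm (ramanujan_sum q n)"
    by (simp add: norm_mult cmod_coef)
  also have "... \<le> al (Re s) q * kap n q"
    by (rule mult_left_mono[OF rs_bound[OF assms True] al_nonneg])
  finally show ?thesis .
next
  case False
  then have "al (Re s) q = 0" by (rule al_nonsqf)
  then have "coef s q = 0" using cmod_coef[of s q] by simp
  then show ?thesis using False by (simp add: al_nonsqf)
qed

lemma al_shift:
  assumes "q > 0"
  shows "al \<sigma> q = al \<tau> q * real q powr (\<tau> - \<sigma>)"
proof -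
  have "real q powr (\<sigma> - 1) = real q powr (\<tau> - 1) * real q powr (\<sigma> - \<tau>)"
    using assms by (simp add: powr_add[symmetric])
  moreover have "real q powr (\<tau> - \<sigma>) = 1 / real q powr (\<sigma> - \<tau>)"
    using assms by (simp add: powr_minus_divide[symmetric])
  ultimately show ?thesis unfolding al_def by simp
qed

lemma al_le_Q:
  assumes "\<tau> \<le> \<sigma>" "1 \<le> Q" "Q \<le> q"
  shows "al \<sigma> q \<le> al \<tau> q * real Q powr (\<tau> - \<sigma>)"
proof -
  have q: "q > 0" using assms by simp
  have "real q powr (\<tau> - \<sigma>) \<le> real Q powr (\<tau> - \<sigma>)"
    using assms by (intro powr_mono2') auto
  then show ?thesis using al_shift[OF q, of \<sigma> \<tau>] al_nonneg[of \<tau> q] by (simp add: mult_left_mono)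
qed

lemma al_le_tau:
  assumes "\<tau> \<le> \<sigma>" "q > 0"
  shows "al \<sigma> q \<le> al \<tau> q"
  using al_le_Q[OF assms(1), of 1 q] assms by simp

lemma shifted_majorant:
  assumes "\<tau> > 1" "n > 0"
  shows "(\<Sum>k<M. al \<tau> (Suc (k + Q)) * kap n (Suc (k + Q))) \<le> exp (2 * Zt \<tau>) * wt \<tau> n"
proof -
  let ?h = "\<lambda>k. Suc (k + Q)"
  let ?G = "\<lambda>q. al \<tau> q * kap n q"
  have nn: "?G q \<ge> 0" for q by (metis al_nonneg kap_ge1 mult_nonneg_nonneg order_trans zero_le_one)
  have inj: "inj_on ?h {..<M}" by (rule inj_onI) simp
  have "(\<Sum>k<M. ?G (?h k)) = (\<Sum>q\<in>?h ` {..<M}. ?G q)" by (simp add: sum.reindex[OF inj])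
  also have "... \<le> (\<Sum>q\<in>{1..Q+M}. ?G q)"
    by (rule sum_mono2) (auto simp: nn)
  also have "... \<le> exp (2 * Zt \<tau>) * wt \<tau> n" by (rule majorant[OF assms])
  finally show ?thesis .
qed

lemma fns_summable_norm:
  assumes "Re s > 1" "n > 0"
  shows "summable (\<lambda>k. norm (coef s (Suc k) * ramanujan_sum (Suc k) n))"
proof (rule summable_comparison_test')
  show "summable (\<lambda>k. al (Re s) (Suc (k + 0)) * kap n (Suc (k + 0)))"
  proof (rule summableI_nonneg_bounded)
    fix k show "0 \<le> al (Re s) (Suc (k + 0)) * kap n (Suc (k + 0))"
      by (metis al_nonneg kap_ge1 mult_nonneg_nonneg order_trans zero_le_one)
  next
    fix M show "(\<Sum>k<M. al (Re s) (Suc (k + 0)) * kap n (Suc (k + 0))) \<le> exp (2 * Zt (Re s)) * wt (Re s) n"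
      by (rule shifted_majorant[OF assms])
  qed
  fix k :: nat assume "k \<ge> 0"
  show "norm (norm (coef s (Suc k) * ramanujan_sum (Suc k) n)) \<le> al (Re s) (Suc (k + 0)) * kap n (Suc (k + 0))"
    using term_bound[of "Suc k" s n] by simp
qed

lemma tail_est:
  assumes "Re s > 1" "n > 0" "1 < \<tau>" "\<tau> \<le> Re s" "Q \<ge> 1"
  shows "norm (fns n s - (\<Sum>k<Q. coef s (Suc k) * ramanujan_sum (Suc k) n))
          \<le> real Q powr (\<tau> - Re s) * (exp (2 * Zt \<tau>) * wt \<tau> n)"
proof -
  define t where "t k = coef s (Suc k) * ramanujan_sum (Suc k) n" for k
  have sn: "summable (\<lambda>k. norm (t k))" unfolding t_def by (rule fns_summable_norm[OF assms(1,2)])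
  have st: "summable t" using summable_norm_cancel[OF sn] .
  have "fns n s = (\<Sum>k. t (k + Q)) + (\<Sum>k<Q. t k)"
    unfolding fns_def t_def[symmetric] by (rule suminf_split_initial_segment[OF st])
  then have "fns n s - (\<Sum>k<Q. t k) = (\<Sum>k. t (k + Q))" by simp
  moreover have "norm (\<Sum>k. t (k + Q)) \<le> real Q powr (\<tau> - Re s) * (exp (2 * Zt \<tau>) * wt \<tau> n)"
  proof -
    have sn': "summable (\<lambda>k. norm (t (k + Q)))" using sn summable_iff_shift[of "\<lambda>k. norm (t k)" Q] by simp
    have "norm (\<Sum>k. t (k + Q)) \<le> (\<Sum>k. norm (t (k + Q)))" by (rule summable_norm[OF sn'])
    also have "... \<le> real Q powr (\<tau> - Re s) * (exp (2 * Zt \<tau>) * wt \<tau> n)"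
    proof (rule suminf_le_const[OF sn'])
      fix M
      have "(\<Sum>k<M. norm (t (k + Q))) \<le> (\<Sum>k<M. real Q powr (\<tau> - Re s) * (al \<tau> (Suc (k + Q)) * kap n (Suc (k + Q))))"
      proof (rule sum_mono)
        fix k
        have "norm (t (k + Q)) \<le> al (Re s) (Suc (k + Q)) * kap n (Suc (k + Q))"
          unfolding t_def by (rule term_bound) simp
        also have "... \<le> al \<tau> (Suc (k + Q)) * real Q powr (\<tau> - Re s) * kap n (Suc (k + Q))"
          using al_le_Q[OF assms(4) assms(5), of "Suc (k + Q)"] kap_ge1[of n "Suc (k + Q)"]
          by (intro mult_right_mono) auto
        finally show "norm (t (k + Q)) \<le> real Q powr (\<tau> - Re s) * (al \<tau> (Suc (k + Q)) * kap n (Suc (k + Q)))"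
          by (simp add: algebra_simps)
      qed
      also have "... = real Q powr (\<tau> - Re s) * (\<Sum>k<M. al \<tau> (Suc (k + Q)) * kap n (Suc (k + Q)))"
        by (simp add: sum_distrib_left)
      also have "... \<le> real Q powr (\<tau> - Re s) * (exp (2 * Zt \<tau>) * wt \<tau> n)"
        by (rule mult_left_mono[OF shifted_majorant[OF assms(3,2)]]) simp
      finally show "(\<Sum>k<M. norm (t (k + Q))) \<le> real Q powr (\<tau> - Re s) * (exp (2 * Zt \<tau>) * wt \<tau> n)" .
    qed
    finally show ?thesis .
  qed
  ultimately show ?thesis unfolding t_def by simp
qed

lemma partial_est:
  assumes "n > 0" "1 < \<tau>" "\<tau> \<le> Re s"
  shows "norm (\<Sum>k<Q. coef s (Suc k) * ramanujan_sum (Suc k) n) \<le> exp (2 * Zt \<tau>) * wt \<tau> n"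
proof -
  have "norm (\<Sum>k<Q. coef s (Suc k) * ramanujan_sum (Suc k) n) \<le> (\<Sum>k<Q. norm (coef s (Suc k) * ramanujan_sum (Suc k) n))"
    by (rule norm_sum)
  also have "... \<le> (\<Sum>k<Q. al \<tau> (Suc (k + 0)) * kap n (Suc (k + 0)))"
  proof (rule sum_mono)
    fix k
    have "norm (coef s (Suc k) * ramanujan_sum (Suc k) n) \<le> al (Re s) (Suc k) * kap n (Suc k)"
      by (rule term_bound) simp
    also have "... \<le> al \<tau> (Suc k) * kap n (Suc k)"
      using al_le_tau[OF assms(3), of "Suc k"] kap_ge1[of n "Suc k"] by (intro mult_right_mono) auto
    finally show "norm (coef s (Suc k) * ramanujan_sum (Suc k) n) \<le> al \<tau> (Suc (k + 0)) * kap n (Suc (k + 0))" by simp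
  qed
  also have "... \<le> exp (2 * Zt \<tau>) * wt \<tau> n" by (rule shifted_majorant[OF assms(2,1)])
  finally show ?thesis .
qed

lemma full_est:
  assumes "Re s > 1" "n > 0" "1 < \<tau>" "\<tau> \<le> Re s"
  shows "norm (fns n s) \<le> exp (2 * Zt \<tau>) * wt \<tau> n"
proof -
  define t where "t k = coef s (Suc k) * ramanujan_sum (Suc k) n" for k
  have st: "summable t" unfolding t_def using summable_norm_cancel[OF fns_summable_norm[OF assms(1,2)]] .
  have "(\<lambda>Q. \<Sum>k<Q. t k) \<longlonglongrightarrow> fns n s" unfolding fns_def t_def[symmetric] by (rule summable_LIMSEQ[OF st])
  then have "(\<lambda>Q. norm (\<Sum>k<Q. t k)) \<longlonglongrightarrow> norm (fns n s)" by (rule tendsto_norm)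
  then show ?thesis
    by (rule LIMSEQ_le_const2) (use partial_est[OF assms(2,3,4)] in \<open>auto simp: t_def\<close>)
qed



lemma spectrum_partial:
  assumes "Re s > 1" "m > 0"
  shows "(\<lambda>Q. \<Sum>k<Q. complex_of_real ((cmod (coef s (Suc k)))\<^sup>2) * ramanujan_sum (Suc k) m) \<longlonglongrightarrow> spectrum m s"
proof -
  have eqt: "complex_of_real ((cmod (coef s (Suc k)))\<^sup>2) * ramanujan_sum (Suc k) m = of_real (gsp m (Re s) (Suc k))" for k
    by (rule spec_term) simp
  have "summable (\<lambda>k. gsp m (Re s) (Suc k))"
    using summable_rabs_cancel[OF spec_summable[of "Re s" m]] assms by simp
  then have S: "summable (\<lambda>k. complex_of_real (gsp m (Re s) (Suc k)))" by (rule summable_of_real)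
  show ?thesis unfolding eqt spectrum_def by (rule summable_LIMSEQ[OF S])
qed

lemma main_limit:
  assumes "Re s > 1"
  shows "((\<lambda>x::real. (1 / of_real x) * (\<Sum>n\<in>{1..nat \<lfloor>x\<rfloor>}.
      (\<Sum>k<Q. coef s (Suc k) * ramanujan_sum (Suc k) n) * (\<Sum>l<Q. coef (cnj s) (Suc l) * ramanujan_sum (Suc l) (n+m))))
    \<longlongrightarrow> (\<Sum>k<Q. complex_of_real ((cmod (coef s (Suc k)))\<^sup>2) * ramanujan_sum (Suc k) m)) at_top"
proof -
  define a where "a k = coef s (Suc k)" for k
  define b where "b l = coef (cnj s) (Suc l)" for l
  define X where "X x k l = (1 / of_real x) * (\<Sum>n\<in>{1..nat \<lfloor>x\<rfloor>}. ramanujan_sum (Suc k) n * ramanujan_sum (Suc l) (n+m))" for x :: real and k l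
  have eq: "(1 / of_real x) * (\<Sum>n\<in>{1..nat \<lfloor>x\<rfloor>}.
      (\<Sum>k<Q. coef s (Suc k) * ramanujan_sum (Suc k) n) * (\<Sum>l<Q. coef (cnj s) (Suc l) * ramanujan_sum (Suc l) (n+m)))
     = (\<Sum>k<Q. \<Sum>l<Q. a k * b l * X x k l)" for x
  proof -
    have "(\<Sum>n\<in>{1..nat \<lfloor>x\<rfloor>}.
      (\<Sum>k<Q. coef s (Suc k) * ramanujan_sum (Suc k) n) * (\<Sum>l<Q. coef (cnj s) (Suc l) * ramanujan_sum (Suc l) (n+m)))
      = (\<Sum>n\<in>{1..nat \<lfloor>x\<rfloor>}. \<Sum>k<Q. \<Sum>l<Q. a k * b l * (ramanujan_sum (Suc k) n * ramanujan_sum (Suc l) (n+m)))"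
      by (simp add: sum_product a_def b_def mult_ac)
    also have "... = (\<Sum>k<Q. \<Sum>n\<in>{1..nat \<lfloor>x\<rfloor>}. \<Sum>l<Q. a k * b l * (ramanujan_sum (Suc k) n * ramanujan_sum (Suc l) (n+m)))"
      by (rule sum.swap)
    also have "... = (\<Sum>k<Q. \<Sum>l<Q. \<Sum>n\<in>{1..nat \<lfloor>x\<rfloor>}. a k * b l * (ramanujan_sum (Suc k) n * ramanujan_sum (Suc l) (n+m)))"
      by (rule sum.cong[OF refl], rule sum.swap)
    finally show ?thesis by (simp add: X_def sum_distrib_left mult_ac)
  qed
  have lim: "((\<lambda>x. \<Sum>k<Q. \<Sum>l<Q. a k * b l * X x k l) \<longlongrightarrow>
      (\<Sum>k<Q. \<Sum>l<Q. a k * b l * (if Suc k = Suc l then ramanujan_sum (Suc k) m else 0))) at_top"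
    unfolding X_def by (intro tendsto_sum tendsto_mult tendsto_const orth) auto
  have "(\<Sum>k<Q. \<Sum>l<Q. a k * b l * (if Suc k = Suc l then ramanujan_sum (Suc k) m else 0))
      = (\<Sum>k<Q. a k * b k * ramanujan_sum (Suc k) m)"
  proof (rule sum.cong[OF refl])
    fix k assume "k \<in> {..<Q}"
    have "(\<Sum>l<Q. a k * b l * (if Suc k = Suc l then ramanujan_sum (Suc k) m else 0))
        = (\<Sum>l<Q. if k = l then a k * b l * ramanujan_sum (Suc k) m else 0)"
      by (rule sum.cong) auto
    also have "... = a k * b k * ramanujan_sum (Suc k) m" using \<open>k \<in> {..<Q}\<close> by (simp add: sum.delta)
    finally show "(\<Sum>l<Q. a k * b l * (if Suc k = Suc l then ramanujan_sum (Suc k) m else 0))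
        = a k * b k * ramanujan_sum (Suc k) m" .
  qed
  also have "... = (\<Sum>k<Q. complex_of_real ((cmod (coef s (Suc k)))\<^sup>2) * ramanujan_sum (Suc k) m)"
    unfolding a_def b_def coef_cnj complex_norm_square by (rule refl)
  finally show ?thesis using lim unfolding eq by simp
qed



lemma sq_sum_shift:
  fixes N m :: nat and w :: "nat \<Rightarrow> real"
  shows "(\<Sum>n\<in>{1..N}. (w (n + m))^2) \<le> (\<Sum>n\<in>{1..N+m}. (w n)^2 :: real)"
proof -
  have inj: "inj_on (\<lambda>n. n + m) {1..N}" by (rule inj_onI) simp
  have "(\<Sum>n\<in>(\<lambda>n. n + m) ` {1..N}. (w n)^2) = (\<Sum>n\<in>{1..N}. (w (n + m))^2)"
    by (subst sum.reindex[OF inj]) (simp add: o_def)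
  then have "(\<Sum>n\<in>{1..N}. (w (n + m))^2) = (\<Sum>n\<in>(\<lambda>n. n + m) ` {1..N}. (w n)^2)" by simp
  also have "... \<le> (\<Sum>n\<in>{1..N+m}. (w n)^2)"
    by (rule sum_mono2) auto
  finally show ?thesis .
qed

lemma diff_est:
  fixes f g F G :: complex and \<eta> K w1 w2 :: real
  assumes "norm (f - F) \<le> \<eta> * (K * w1)" "norm g \<le> K * w2" "norm F \<le> K * w1"
    "norm (g - G) \<le> \<eta> * (K * w2)" "\<eta> \<ge> 0" "K \<ge> 0" "w1 \<ge> 0" "w2 \<ge> 0"
  shows "norm (f * g - F * G) \<le> \<eta> * K * K * (w1^2 + w2^2)"
proof -
  have "f * g - F * G = (f - F) * g + F * (g - G)" by (simp add: algebra_simps)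
  then have "norm (f * g - F * G) \<le> norm (f - F) * norm g + norm F * norm (g - G)"
    by (metis norm_mult norm_triangle_ineq)
  also have "... \<le> \<eta> * (K * w1) * (K * w2) + K * w1 * (\<eta> * (K * w2))"
    using assms by (intro add_mono mult_mono) auto
  also have "... = \<eta> * K * K * (2 * w1 * w2)" by (simp add: algebra_simps)
  also have "... \<le> \<eta> * K * K * (w1^2 + w2^2)"
  proof (rule mult_left_mono)
    have "0 \<le> (w1 - w2)^2" by simp
    then show "2 * w1 * w2 \<le> w1^2 + w2^2" by (simp add: power2_eq_square algebra_simps)
  qed (use assms in simp)
  finally show ?thesis .
qed

lemma part1:
  assumes "Re s > 1" "m \<ge> 1"
  shows "((\<lambda>x::real. (1 / of_real x) * (\<Sum>n\<in>{1..nat \<lfloor>x\<rfloor>}. fns n s * fns (n + m) (cnj s)))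
            \<longlongrightarrow> spectrum m s) at_top"
proof -
  define \<sigma> where "\<sigma> = Re s"
  define \<tau> where "\<tau> = (\<sigma> + 1) / 2"
  have \<tau>1: "\<tau> > 1" and \<tau>\<sigma>: "\<tau> \<le> \<sigma>" and neg: "\<tau> - \<sigma> < 0"
    using assms by (auto simp: \<tau>_def \<sigma>_def)
  define K where "K = exp (2 * Zt \<tau>)"
  define C where "C = exp (8 * Zt \<tau>)"
  define D where "D = K * K * C * (2 + real m)"
  define F where "F Q n = (\<Sum>k<Q. coef s (Suc k) * ramanujan_sum (Suc k) n)" for Q n
  define G where "G Q n = (\<Sum>l<Q. coef (cnj s) (Suc l) * ramanujan_sum (Suc l) n)" for Q n
  define P where "P Q = (\<Sum>k<Q. complex_of_real ((cmod (coef s (Suc k)))\<^sup>2) * ramanujan_sum (Suc k) m)" for Q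
  define M where "M = (\<lambda>x::real. (1 / of_real x) * (\<Sum>n\<in>{1..nat \<lfloor>x\<rfloor>}. fns n s * fns (n + m) (cnj s)))"
  define MQ where "MQ Q = (\<lambda>x::real. (1 / of_real x) * (\<Sum>n\<in>{1..nat \<lfloor>x\<rfloor>}. F Q n * G Q (n + m)))" for Q
  have Rc: "Re (cnj s) = \<sigma>" by (simp add: \<sigma>_def)
  have K0: "K \<ge> 0" and C0: "C \<ge> 0" by (simp_all add: K_def C_def)
  have w0: "wt \<tau> n \<ge> 0" for n using wt_ge1[of \<tau> n] by simp
  have diff: "norm (M x - MQ Q x) \<le> D * real Q powr (\<tau> - \<sigma>)" if x: "x \<ge> 1" and Q: "Q \<ge> 1" for x Q
  proof -
    define N where "N = nat \<lfloor>x\<rfloor>"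
    define \<eta> where "\<eta> = real Q powr (\<tau> - \<sigma>)"
    have \<eta>0: "\<eta> \<ge> 0" by (simp add: \<eta>_def)
    have pt: "norm (fns n s * fns (n + m) (cnj s) - F Q n * G Q (n + m))
        \<le> \<eta> * K * K * ((wt \<tau> n)^2 + (wt \<tau> (n + m))^2)" if n: "n \<in> {1..N}" for n
    proof (rule diff_est)
      have n0: "n > 0" "n + m > 0" using n by auto
      show "norm (fns n s - F Q n) \<le> \<eta> * (K * wt \<tau> n)"
        unfolding F_def \<eta>_def K_def using tail_est[OF assms(1) n0(1) \<tau>1 _ Q] \<tau>\<sigma> by (simp add: \<sigma>_def)
      show "norm (fns (n + m) (cnj s)) \<le> K * wt \<tau> (n + m)"
        unfolding K_def using full_est[of "cnj s" "n + m" \<tau>] assms(1) n0 \<tau>1 \<tau>\<sigma> Rc by simp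
      show "norm (F Q n) \<le> K * wt \<tau> n"
        unfolding F_def K_def using partial_est[OF n0(1) \<tau>1, of s Q] \<tau>\<sigma> by (simp add: \<sigma>_def)
      show "norm (fns (n + m) (cnj s) - G Q (n + m)) \<le> \<eta> * (K * wt \<tau> (n + m))"
        unfolding G_def \<eta>_def K_def using tail_est[of "cnj s" "n + m" \<tau> Q] assms(1) n0 \<tau>1 \<tau>\<sigma> Q Rc by simp
    qed (use \<eta>0 K0 w0 in auto)
    have "norm (M x - MQ Q x) = norm ((1 / of_real x) * (\<Sum>n\<in>{1..N}. fns n s * fns (n + m) (cnj s) - F Q n * G Q (n + m)))"
      unfolding M_def MQ_def N_def by (simp add: sum_subtractf algebra_simps)
    also have "... = (1 / x) * norm (\<Sum>n\<in>{1..N}. fns n s * fns (n + m) (cnj s) - F Q n * G Q (n + m))"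
      using x by (simp add: norm_mult norm_divide)
    also have "... \<le> (1 / x) * (\<Sum>n\<in>{1..N}. \<eta> * K * K * ((wt \<tau> n)^2 + (wt \<tau> (n + m))^2))"
    proof (rule mult_left_mono)
      have "norm (\<Sum>n\<in>{1..N}. fns n s * fns (n + m) (cnj s) - F Q n * G Q (n + m))
          \<le> (\<Sum>n\<in>{1..N}. norm (fns n s * fns (n + m) (cnj s) - F Q n * G Q (n + m)))" by (rule norm_sum)
      also have "... \<le> (\<Sum>n\<in>{1..N}. \<eta> * K * K * ((wt \<tau> n)^2 + (wt \<tau> (n + m))^2))"
        by (rule sum_mono) (rule pt)
      finally show "norm (\<Sum>n\<in>{1..N}. fns n s * fns (n + m) (cnj s) - F Q n * G Q (n + m))
          \<le> (\<Sum>n\<in>{1..N}. \<eta> * K * K * ((wt \<tau> n)^2 + (wt \<tau> (n + m))^2))" .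
    qed (use x in simp)
    also have "... = (1 / x) * (\<eta> * K * K * (\<Sum>n\<in>{1..N}. (wt \<tau> n)^2 + (wt \<tau> (n + m))^2))"
      by (simp only: sum_distrib_left)
    also have "... = (1 / x) * (\<eta> * K * K * ((\<Sum>n\<in>{1..N}. (wt \<tau> n)^2) + (\<Sum>n\<in>{1..N}. (wt \<tau> (n + m))^2)))"
      by (simp only: sum.distrib)
    also have "... \<le> (1 / x) * (\<eta> * K * K * (C * real N + C * real (N + m)))"
    proof (intro mult_left_mono add_mono)
      show "(\<Sum>n\<in>{1..N}. (wt \<tau> n)^2) \<le> C * real N" unfolding C_def using L2[OF \<tau>1, of N] by simp
      have "(\<Sum>n\<in>{1..N}. (wt \<tau> (n + m))^2) \<le> (\<Sum>n\<in>{1..N+m}. (wt \<tau> n)^2)" by (rule sq_sum_shift)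
      also have "... \<le> C * real (N + m)" unfolding C_def using L2[OF \<tau>1, of "N + m"] by simp
      finally show "(\<Sum>n\<in>{1..N}. (wt \<tau> (n + m))^2) \<le> C * real (N + m)" .
    qed (use x \<eta>0 K0 in auto)
    also have "... = \<eta> * (K * K * C * ((2 * real N + real m) / x))"
      using x by (simp add: field_simps)
    also have "... \<le> \<eta> * (K * K * C * (2 + real m))"
    proof (intro mult_left_mono)
      have "real N \<le> x" using x unfolding N_def by linarith
      moreover have "real m \<le> real m * x" using x mult_left_mono[of 1 x "real m"] by simp
      moreover have "(2 + real m) * x = 2 * x + real m * x" by (simp add: algebra_simps)
      ultimately have "2 * real N + real m \<le> (2 + real m) * x" by linarith
      then show "(2 * real N + real m) / x \<le> 2 + real m" using x by (simp add: divide_le_eq)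
    qed (use \<eta>0 K0 C0 in auto)
    finally show ?thesis by (simp add: D_def \<eta>_def mult_ac)
  qed
  have Plim: "P \<longlonglongrightarrow> spectrum m s" unfolding P_def by (rule spectrum_partial) (use assms in auto)
  have MQlim: "(MQ Q \<longlongrightarrow> P Q) at_top" for Q
    unfolding MQ_def F_def G_def P_def by (rule main_limit[OF assms(1)])
  have etalim: "(\<lambda>Q. D * real Q powr (\<tau> - \<sigma>)) \<longlonglongrightarrow> 0"
    using tendsto_mult_right_zero[OF tendsto_neg_powr[OF neg filterlim_real_sequentially]] by simp
  have "(M \<longlongrightarrow> spectrum m s) at_top"
  proof (rule tendstoI)
    fix \<epsilon> :: real assume e: "\<epsilon> > 0"
    have "eventually (\<lambda>Q. dist (P Q) (spectrum m s) < \<epsilon>/3) sequentially"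
      using tendstoD[OF Plim, of "\<epsilon>/3"] e by simp
    moreover have "eventually (\<lambda>Q. dist (D * real Q powr (\<tau> - \<sigma>)) 0 < \<epsilon>/3) sequentially"
      using tendstoD[OF etalim, of "\<epsilon>/3"] e by simp
    moreover have "eventually (\<lambda>Q. Q \<ge> (1::nat)) sequentially" by (rule eventually_ge_at_top)
    ultimately have "eventually (\<lambda>Q. dist (P Q) (spectrum m s) < \<epsilon>/3 \<and> dist (D * real Q powr (\<tau> - \<sigma>)) 0 < \<epsilon>/3 \<and> Q \<ge> 1) sequentially"
      by eventually_elim auto
    then obtain N0 where N0: "\<forall>Q\<ge>N0. dist (P Q) (spectrum m s) < \<epsilon>/3 \<and> dist (D * real Q powr (\<tau> - \<sigma>)) 0 < \<epsilon>/3 \<and> Q \<ge> 1"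
      unfolding eventually_sequentially by blast
    define Q where "Q = N0"
    have Q: "dist (P Q) (spectrum m s) < \<epsilon>/3" "dist (D * real Q powr (\<tau> - \<sigma>)) 0 < \<epsilon>/3" "Q \<ge> 1"
      using N0 unfolding Q_def by auto
    have "eventually (\<lambda>x. dist (MQ Q x) (P Q) < \<epsilon>/3) at_top"
      using tendstoD[OF MQlim, of "\<epsilon>/3"] e by simp
    moreover have "eventually (\<lambda>x::real. x \<ge> 1) at_top" by (rule eventually_ge_at_top)
    ultimately show "eventually (\<lambda>x. dist (M x) (spectrum m s) < \<epsilon>) at_top"
    proof eventually_elim
      case (elim x)
      have t1: "dist (M x) (spectrum m s) \<le> dist (M x) (P Q) + dist (P Q) (spectrum m s)"
        by (rule dist_triangle)
      have t2: "dist (M x) (P Q) \<le> dist (M x) (MQ Q x) + dist (MQ Q x) (P Q)"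
        by (rule dist_triangle)
      have "dist (M x) (spectrum m s) \<le> dist (M x) (MQ Q x) + dist (MQ Q x) (P Q) + dist (P Q) (spectrum m s)"
        using t1 t2 by linarith
      moreover have "dist (M x) (MQ Q x) \<le> D * real Q powr (\<tau> - \<sigma>)"
        using diff[OF elim(2) Q(3)] by (simp add: dist_norm)
      moreover have "D * real Q powr (\<tau> - \<sigma>) < \<epsilon>/3" using Q(2) by simp
      ultimately show ?case using elim(1) Q(1) by linarith
    qed
  qed
  then show ?thesis unfolding M_def .
qed


theorem theorem7p1:
  fixes m :: nat and s :: complex
  assumes "m \<ge> 1" and "Re s > 1"
  shows "((\<lambda>x::real. (1 / of_real x) *
            (\<Sum>n\<in>{1..nat \<lfloor>x\<rfloor>}. fns n s * fns (n + m) (cnj s)))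
            \<longlongrightarrow> spectrum m s) at_top
     \<and> (\<lambda>p. complex_of_real (euler_factor m (Re s) p)) has_prod spectrum m s
     \<and> (odd m \<longrightarrow> ((\<lambda>\<sigma>::real. spectrum m (complex_of_real \<sigma>)) \<longlongrightarrow> 0) (at_right 1))
     \<and> (m \<ge> 2 \<and> even m \<longrightarrow> (\<forall>\<sigma>::real. \<sigma> \<ge> 1 \<longrightarrow>
           spectrum m (complex_of_real \<sigma>) \<in> \<real> \<and> Re (spectrum m (complex_of_real \<sigma>)) \<ge> 1 / 2))"
proof -
  have m0: "m > 0" using assms(1) by simp
  have A: "((\<lambda>x::real. (1 / of_real x) *
            (\<Sum>n\<in>{1..nat \<lfloor>x\<rfloor>}. fns n s * fns (n + m) (cnj s)))
            \<longlongrightarrow> spectrum m s) at_top" by (rule part1[OF assms(2) assms(1)])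
  have B: "(\<lambda>p. complex_of_real (euler_factor m (Re s) p)) has_prod spectrum m s"
    by (rule part2[OF assms(2) m0])
  have C: "odd m \<longrightarrow> ((\<lambda>\<sigma>::real. spectrum m (complex_of_real \<sigma>)) \<longlongrightarrow> 0) (at_right 1)"
    using part3[of m] by blast
  have D: "m \<ge> 2 \<and> even m \<longrightarrow> (\<forall>\<sigma>::real. \<sigma> \<ge> 1 \<longrightarrow>
           spectrum m (complex_of_real \<sigma>) \<in> \<real> \<and> Re (spectrum m (complex_of_real \<sigma>)) \<ge> 1 / 2)"
    using part4[of m] by blast
  show ?thesis using A B C D by blast
qed

end
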